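(* Let $\phi: M_n\to M_n$ be a unital PPT map with $\phi\circ\phi=\phi$. Then the range $\phi(M_n)$ is an abelian C$^*$-algebra with respect to the product $a\ast b=\phi(ab)$ for $a,b\in\phi(M_n)$ (with the involution and norm inherited from $M_n$).
   Context: $M_n$ denotes the $n\times n$ complex matrices. A linear map is completely positive (CP) if $\phi\otimes \mathrm{id}_k$ is positive for all $k$. A CP map $\phi: M_n\to M_n$ is PPT if $T\circ\phi$ is CP, where $T$ is the transpose map on $M_n$. It is known (Choi–Effros) that the range of an idempotent unital CP map is a C$^*$-algebra under the product $a\ast b=\phi(ab)$. *)

theory Defs
  imports "Jordan_Normal_Form.Schur_Decomposition"
begin

definition psd_mat :: "nat \<Rightarrow> complex mat \<Rightarrow> bool" where
  "psd_mat m A \<longleftrightarrow> A \<in> carrier_mat m m \<and>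
     (\<exists>B \<in> carrier_mat m m. A = mat_adjoint B * B)"

definition lin_map_on :: "nat \<Rightarrow> (complex mat \<Rightarrow> complex mat) \<Rightarrow> bool" where
  "lin_map_on n \<phi> \<longleftrightarrow>
     (\<forall>A \<in> carrier_mat n n. \<phi> A \<in> carrier_mat n n) \<and>
     (\<forall>A \<in> carrier_mat n n. \<forall>B \<in> carrier_mat n n. \<phi> (A + B) = \<phi> A + \<phi> B) \<and>
     (\<forall>A \<in> carrier_mat n n. \<forall>c. \<phi> (c \<cdot>\<^sub>m A) = c \<cdot>\<^sub>m \<phi> A)"

definition block_of :: "nat \<Rightarrow> complex mat \<Rightarrow> nat \<Rightarrow> nat \<Rightarrow> complex mat" where
  "block_of n X p q = mat n n (\<lambda>(a,b). X $$ (p*n + a, q*n + b))"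

(* (id_k \<otimes> \<phi>) on M_k(M_n) = M_k \<otimes> M_n: apply \<phi> to each n x n block. *)
definition ampl :: "nat \<Rightarrow> nat \<Rightarrow> (complex mat \<Rightarrow> complex mat) \<Rightarrow> complex mat \<Rightarrow> complex mat" where
  "ampl n k \<phi> X = mat (k*n) (k*n)
     (\<lambda>(i,j). \<phi> (block_of n X (i div n) (j div n)) $$ (i mod n, j mod n))"

definition positive_map :: "nat \<Rightarrow> (complex mat \<Rightarrow> complex mat) \<Rightarrow> bool" where
  "positive_map n \<phi> \<longleftrightarrow> (\<forall>A. psd_mat n A \<longrightarrow> psd_mat n (\<phi> A))"

definition completely_positive :: "nat \<Rightarrow> (complex mat \<Rightarrow> complex mat) \<Rightarrow> bool" where
  "completely_positive n \<phi> \<longleftrightarrow> lin_map_on n \<phi> \<and>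
     (\<forall>k. \<forall>X. psd_mat (k*n) X \<longrightarrow> psd_mat (k*n) (ampl n k \<phi> X))"

definition PPT_map :: "nat \<Rightarrow> (complex mat \<Rightarrow> complex mat) \<Rightarrow> bool" where
  "PPT_map n \<phi> \<longleftrightarrow> completely_positive n \<phi> \<and> completely_positive n (transpose_mat \<circ> \<phi>)"

definition unital_map :: "nat \<Rightarrow> (complex mat \<Rightarrow> complex mat) \<Rightarrow> bool" where
  "unital_map n \<phi> \<longleftrightarrow> \<phi> (1\<^sub>m n) = 1\<^sub>m n"

definition vec_norm :: "complex vec \<Rightarrow> real" where
  "vec_norm v = sqrt (\<Sum>i<dim_vec v. (cmod (v $ i))^2)"

definition op_norm :: "complex mat \<Rightarrow> real" where
  "op_norm A = Sup {vec_norm (A *\<^sub>v v) | v. v \<in> carrier_vec (dim_col A) \<and> vec_norm v \<le> 1}"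

definition is_Cstar_algebra ::
  "nat \<Rightarrow> complex mat set \<Rightarrow> (complex mat \<Rightarrow> complex mat \<Rightarrow> complex mat) \<Rightarrow> bool" where
  "is_Cstar_algebra n S prd \<longleftrightarrow>
     S \<subseteq> carrier_mat n n \<and>
     0\<^sub>m n n \<in> S \<and>
     (\<forall>a\<in>S. \<forall>b\<in>S. a + b \<in> S) \<and>
     (\<forall>a\<in>S. \<forall>c. c \<cdot>\<^sub>m a \<in> S) \<and>
     (\<forall>a\<in>S. \<forall>b\<in>S. prd a b \<in> S) \<and>
     (\<forall>a\<in>S. \<forall>b\<in>S. \<forall>c\<in>S. prd (prd a b) c = prd a (prd b c)) \<and>
     (\<forall>a\<in>S. \<forall>b\<in>S. \<forall>c\<in>S. prd a (b + c) = prd a b + prd a c \<and>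
                              prd (a + b) c = prd a c + prd b c) \<and>
     (\<forall>a\<in>S. \<forall>b\<in>S. \<forall>z. prd (z \<cdot>\<^sub>m a) b = z \<cdot>\<^sub>m prd a b \<and>
                         prd a (z \<cdot>\<^sub>m b) = z \<cdot>\<^sub>m prd a b) \<and>
     (\<forall>a\<in>S. mat_adjoint a \<in> S) \<and>
     (\<forall>a\<in>S. \<forall>b\<in>S. mat_adjoint (prd a b) = prd (mat_adjoint b) (mat_adjoint a)) \<and>
     (\<forall>a\<in>S. \<forall>b\<in>S. op_norm (prd a b) \<le> op_norm a * op_norm b) \<and>
     (\<forall>a\<in>S. op_norm (prd (mat_adjoint a) a) = (op_norm a)^2) \<and>
     (\<forall>f. (\<forall>m. f m \<in> S) \<and> (\<forall>e>0. \<exists>N. \<forall>p\<ge>N. \<forall>q\<ge>N. op_norm (f p - f q) < e) \<longrightarrow>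
          (\<exists>L\<in>S. (\<lambda>m. op_norm (f m - L)) \<longlonglongrightarrow> 0))"

definition is_abelian :: "complex mat set \<Rightarrow> (complex mat \<Rightarrow> complex mat \<Rightarrow> complex mat) \<Rightarrow> bool" where
  "is_abelian S prd \<longleftrightarrow> (\<forall>a\<in>S. \<forall>b\<in>S. prd a b = prd b a)"

end

theory Submission
  imports Defs
begin

lemma adj_dims[simp]: "dim_row (mat_adjoint A) = dim_col A" "dim_col (mat_adjoint A) = dim_row A"
  by (auto simp: mat_adjoint_def mat_of_rows_def)

lemma adj_index[simp]: "i < dim_col A \<Longrightarrow> j < dim_row A \<Longrightarrow> mat_adjoint A $$ (i,j) = cnj (A $$ (j,i))"
  by (auto simp: mat_adjoint_def mat_of_rows_def)

lemma adj_carrier[simp]: "A \<in> carrier_mat m n \<Longrightarrow> mat_adjoint A \<in> carrier_mat n m"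
  by (intro carrier_matI) (simp_all add: carrier_matD)

lemma adj_adj[simp]: "mat_adjoint (mat_adjoint (A::complex mat)) = A"
  by (rule eq_matI, auto)

lemma adj_mult: "(A::complex mat) \<in> carrier_mat m k \<Longrightarrow> B \<in> carrier_mat k n \<Longrightarrow>
   mat_adjoint (A * B) = mat_adjoint B * mat_adjoint A"
  by (rule eq_matI, auto simp: scalar_prod_def sum_distrib_left mult.commute intro!: sum.cong)

lemma adj_add: "(A::complex mat) \<in> carrier_mat m n \<Longrightarrow> B \<in> carrier_mat m n \<Longrightarrow>
   mat_adjoint (A + B) = mat_adjoint A + mat_adjoint B"
  by (rule eq_matI, auto)

lemma adj_minus: "(A::complex mat) \<in> carrier_mat m n \<Longrightarrow> B \<in> carrier_mat m n \<Longrightarrow>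
   mat_adjoint (A - B) = mat_adjoint A - mat_adjoint B"
  by (rule eq_matI, auto)

lemma adj_smult: "mat_adjoint (c \<cdot>\<^sub>m (A::complex mat)) = cnj c \<cdot>\<^sub>m mat_adjoint A"
  by (rule eq_matI, auto)

lemma adj_one[simp]: "mat_adjoint (1\<^sub>m n) = (1\<^sub>m n :: complex mat)"
  by (rule eq_matI, auto)

lemma adj_zero[simp]: "mat_adjoint (0\<^sub>m m n) = (0\<^sub>m n m :: complex mat)"
  by (rule eq_matI, auto)

lemma adj_four_block: "(A::complex mat) \<in> carrier_mat m1 n1 \<Longrightarrow> B \<in> carrier_mat m1 n2 \<Longrightarrow> C \<in> carrier_mat m2 n1
  \<Longrightarrow> D \<in> carrier_mat m2 n2 \<Longrightarrow>
  mat_adjoint (four_block_mat A B C D) = four_block_mat (mat_adjoint A) (mat_adjoint C) (mat_adjoint B) (mat_adjoint D)"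
  by (rule eq_matI, auto)

definition ip :: "complex vec \<Rightarrow> complex vec \<Rightarrow> complex" where
  "ip u v = (\<Sum>i<dim_vec v. cnj (u $ i) * v $ i)"

lemma ip_adj: assumes "A \<in> carrier_mat m n" "u \<in> carrier_vec m" "v \<in> carrier_vec n"
  shows "ip u (A *\<^sub>v v) = ip (mat_adjoint A *\<^sub>v u) v"
proof -
  have "ip u (A *\<^sub>v v) = (\<Sum>i<m. \<Sum>j<n. cnj (u $ i) * (A $$ (i,j) * v $ j))"
    using assms by (auto simp: ip_def scalar_prod_def sum_distrib_left atLeast0LessThan)
  also have "\<dots> = (\<Sum>j<n. \<Sum>i<m. cnj (u $ i) * (A $$ (i,j) * v $ j))"
    by (rule sum.swap)
  also have "\<dots> = (\<Sum>j<n. (\<Sum>i<m. A $$ (i,j) * cnj (u $ i)) * v $ j)"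
    unfolding sum_distrib_right by (intro sum.cong refl, simp only: mult.assoc mult.commute mult.left_commute)
  also have "\<dots> = ip (mat_adjoint A *\<^sub>v u) v"
  proof -
    have e: "cnj ((mat_adjoint A *\<^sub>v u) $ j) = (\<Sum>i<m. A $$ (i,j) * cnj (u $ i))" if "j < n" for j
      using assms that by (simp add: scalar_prod_def atLeast0LessThan cnj_sum)
    show ?thesis unfolding ip_def
    proof (rule sum.cong)
      show "{..<n} = {..<dim_vec v}" using assms by simp
      fix j assume "j \<in> {..<dim_vec v}"
      then show "(\<Sum>i<m. A $$ (i, j) * cnj (u $ i)) * v $ j = cnj ((mat_adjoint A *\<^sub>v u) $ j) * v $ j"
        using e[of j] assms by simp
    qed
  qed
  finally show ?thesis .
qed

lemma ip_add_right: "u \<in> carrier_vec n \<Longrightarrow> v \<in> carrier_vec n \<Longrightarrow> w \<in> carrier_vec n \<Longrightarrow> ip u (v + w) = ip u v + ip u w"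
  by (simp add: ip_def sum.distrib distrib_left)
lemma ip_add_left: "u \<in> carrier_vec n \<Longrightarrow> v \<in> carrier_vec n \<Longrightarrow> w \<in> carrier_vec n \<Longrightarrow> ip (v + w) u = ip v u + ip w u"
  by (simp add: ip_def sum.distrib distrib_right)
lemma ip_minus_right: "u \<in> carrier_vec n \<Longrightarrow> v \<in> carrier_vec n \<Longrightarrow> w \<in> carrier_vec n \<Longrightarrow> ip u (v - w) = ip u v - ip u w"
  by (simp add: ip_def sum_subtractf right_diff_distrib)
lemma ip_minus_left: "u \<in> carrier_vec n \<Longrightarrow> v \<in> carrier_vec n \<Longrightarrow> w \<in> carrier_vec n \<Longrightarrow> ip (v - w) u = ip v u - ip w u"
  by (simp add: ip_def sum_subtractf left_diff_distrib)
lemma ip_smult_right: "ip u (c \<cdot>\<^sub>v v) = c * ip u v"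
  by (simp add: ip_def sum_distrib_left mult.left_commute)
lemma ip_smult_left: "u \<in> carrier_vec n \<Longrightarrow> v \<in> carrier_vec n \<Longrightarrow> ip (c \<cdot>\<^sub>v u) v = cnj c * ip u v"
  by (auto simp: ip_def sum_distrib_left mult.assoc intro!: sum.cong)
lemma ip_zero_right[simp]: "ip u (0\<^sub>v n) = 0" by (auto simp: ip_def)
lemma ip_zero_left[simp]: "v \<in> carrier_vec n \<Longrightarrow> ip (0\<^sub>v n) v = 0" by (auto simp: ip_def)
lemma ip_cnj: "u \<in> carrier_vec n \<Longrightarrow> v \<in> carrier_vec n \<Longrightarrow> cnj (ip u v) = ip v u"
  by (auto simp: ip_def mult.commute)

lemma ip_conv: "dim_vec u = dim_vec v \<Longrightarrow> ip u v = conjugate u \<bullet> v"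
  by (auto simp: ip_def scalar_prod_def atLeast0LessThan)

lemma conjugate_append: "conjugate (u1 @\<^sub>v u2) = conjugate u1 @\<^sub>v (conjugate u2 :: complex vec)"
  by (rule eq_vecI, auto simp: append_vec_def Let_def)

lemma ip_append: "u1 \<in> carrier_vec n1 \<Longrightarrow> v1 \<in> carrier_vec n1 \<Longrightarrow> u2 \<in> carrier_vec n2 \<Longrightarrow> v2 \<in> carrier_vec n2 \<Longrightarrow>
   ip (u1 @\<^sub>v u2) (v1 @\<^sub>v v2) = ip u1 v1 + ip u2 v2"
  by (subst (1 2 3) ip_conv, auto simp: conjugate_append intro!: scalar_prod_append)

lemma ip_self_real: "ip v v = of_real (\<Sum>i<dim_vec v. (cmod (v $ i))^2)"
  unfolding ip_def of_real_sum
  by (intro sum.cong refl, metis complex_norm_square mult.commute complex_mult_cnj)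

lemma vec_norm_sq: "(vec_norm v)^2 = (\<Sum>i<dim_vec v. (cmod (v $ i))^2)"
  by (simp add: vec_norm_def sum_nonneg)

lemma ip_self: "ip v v = of_real ((vec_norm v)^2)"
  by (simp add: ip_self_real vec_norm_sq)

lemma vec_norm_nonneg: "vec_norm v \<ge> 0" by (simp add: vec_norm_def sum_nonneg)

lemma cs_real_sum:
  fixes a b :: "'i \<Rightarrow> real"
  shows "(\<Sum>i\<in>I. a i * b i)\<^sup>2 \<le> (\<Sum>i\<in>I. (a i)\<^sup>2) * (\<Sum>i\<in>I. (b i)\<^sup>2)"
proof (cases "(\<Sum>i\<in>I. (b i)\<^sup>2) > 0")
  case False
  have ge: "(\<Sum>i\<in>I. (b i)\<^sup>2) \<ge> 0" by (rule sum_nonneg) simp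
  with False have z: "(\<Sum>i\<in>I. (b i)\<^sup>2) = 0" by simp
  show ?thesis
  proof (cases "finite I")
    case True
    have "\<forall>i\<in>I. (b i)\<^sup>2 = 0" using z sum_nonneg_eq_0_iff[OF True, of "\<lambda>i. (b i)\<^sup>2"] by simp
    then have "(\<Sum>i\<in>I. a i * b i) = 0" by simp
    then show ?thesis using z by simp
  next
    case False
    then show ?thesis by simp
  qed
next
  case True
  define B where "B = (\<Sum>i\<in>I. (b i)\<^sup>2)"
  define A where "A = (\<Sum>i\<in>I. (a i)\<^sup>2)"
  define C where "C = (\<Sum>i\<in>I. a i * b i)"
  define r where "r = C / B"
  have B: "B > 0" using True B_def by simp
  have "0 \<le> (\<Sum>i\<in>I. (a i - r * b i)\<^sup>2)"
    by (rule sum_nonneg) simp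
  also have "(\<Sum>i\<in>I. (a i - r * b i)\<^sup>2) = (\<Sum>i\<in>I. (a i)\<^sup>2 - 2 * r * (a i * b i) + r\<^sup>2 * (b i)\<^sup>2)"
    by (rule sum.cong) (simp_all add: power2_eq_square algebra_simps)
  also have "\<dots> = A - 2 * r * C + r\<^sup>2 * B"
    unfolding A_def B_def C_def by (simp add: sum.distrib sum_subtractf sum_distrib_left)
  also have "\<dots> = A - C\<^sup>2 / B"
    using B unfolding r_def by (simp add: power2_eq_square field_simps)
  finally have "C\<^sup>2 / B \<le> A" by simp
  then show ?thesis using B unfolding A_def B_def C_def by (simp add: pos_divide_le_eq)
qed

lemma vec_norm_ip: "(vec_norm v)^2 = Re (ip v v)"
  by (simp add: ip_self)

lemma vec_norm_zero_vec[simp]: "vec_norm (0\<^sub>v n) = 0"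
  by (simp add: vec_norm_def)

lemma vec_norm_eq_0: assumes "vec_norm v = 0" shows "v = 0\<^sub>v (dim_vec v)"
proof -
  have "(\<Sum>i<dim_vec v. (cmod (v $ i))^2) = 0" using assms vec_norm_sq[of v] by simp
  then have "\<forall>i\<in>{..<dim_vec v}. (cmod (v $ i))^2 = 0"
    by (subst sum_nonneg_eq_0_iff[symmetric]) auto
  then show ?thesis by (intro eq_vecI) auto
qed

lemma vec_norm_smult: "vec_norm (c \<cdot>\<^sub>v v) = cmod c * vec_norm v"
proof -
  have "(vec_norm (c \<cdot>\<^sub>v v))^2 = (cmod c * vec_norm v)^2"
    unfolding vec_norm_sq power_mult_distrib by (simp add: sum_distrib_left norm_mult power_mult_distrib)
  then show ?thesis
    by (metis mult_nonneg_nonneg norm_ge_zero power2_eq_iff_nonneg vec_norm_nonneg)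
qed

lemma cauchy_schwarz: assumes "dim_vec u = dim_vec v"
  shows "cmod (ip u v) \<le> vec_norm u * vec_norm v"
proof -
  have "cmod (ip u v) \<le> (\<Sum>i<dim_vec v. cmod (u $ i) * cmod (v $ i))"
    unfolding ip_def by (rule order.trans[OF norm_sum]) (simp add: norm_mult)
  also have "\<dots> \<le> sqrt ((\<Sum>i<dim_vec v. (cmod (u $ i))^2) * (\<Sum>i<dim_vec v. (cmod (v $ i))^2))"
    by (rule real_le_rsqrt, rule cs_real_sum)
  also have "\<dots> = vec_norm u * vec_norm v"
    using assms by (simp add: vec_norm_def real_sqrt_mult)
  finally show ?thesis .
qed

lemma vec_norm_add: assumes "u \<in> carrier_vec n" "v \<in> carrier_vec n"
  shows "vec_norm (u + v) \<le> vec_norm u + vec_norm v"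
proof -
  have "(vec_norm (u + v))^2 = Re (ip u u) + Re (ip u v) + Re (ip v u) + Re (ip v v)"
    using assms by (simp add: vec_norm_ip ip_add_left[of _ n] ip_add_right[of _ n])
  also have "Re (ip v u) = Re (ip u v)" using ip_cnj[OF assms, symmetric] by simp
  also have "Re (ip u v) \<le> vec_norm u * vec_norm v"
    using cauchy_schwarz[of u v] assms complex_Re_le_cmod[of "ip u v"] by simp
  finally have "(vec_norm (u + v))^2 \<le> (vec_norm u + vec_norm v)^2"
    by (simp add: vec_norm_ip[symmetric] power2_sum)
  then show ?thesis
    by (rule power2_le_imp_le) (simp add: vec_norm_nonneg add_nonneg_nonneg)
qed

definition frob :: "complex mat \<Rightarrow> real" where
  "frob A = sqrt (\<Sum>i<dim_row A. \<Sum>j<dim_col A. (cmod (A $$ (i,j)))^2)"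

lemma mult_vec_bound: assumes "v \<in> carrier_vec (dim_col A)"
  shows "vec_norm (A *\<^sub>v v) \<le> frob A * vec_norm v"
proof -
  have row: "cmod ((A *\<^sub>v v) $ i) ^2 \<le> (\<Sum>j<dim_col A. (cmod (A $$ (i,j)))^2) * (vec_norm v)^2"
    if i: "i < dim_row A" for i
  proof -
    have "(A *\<^sub>v v) $ i = ip (conjugate (row A i)) v"
      using i assms by (simp add: ip_conv scalar_prod_def)
    then have "cmod ((A *\<^sub>v v) $ i) \<le> vec_norm (conjugate (row A i)) * vec_norm v"
      using assms cauchy_schwarz[of "conjugate (row A i)" v] by simp
    then have "cmod ((A *\<^sub>v v) $ i) ^2 \<le> (vec_norm (conjugate (row A i)) * vec_norm v)^2"
      by (simp add: power_mono)
    also have "\<dots> = (vec_norm (conjugate (row A i)))^2 * (vec_norm v)^2"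
      by (simp add: power_mult_distrib)
    also have "(vec_norm (conjugate (row A i)))^2 = (\<Sum>j<dim_col A. (cmod (A $$ (i,j)))^2)"
      using i by (simp add: vec_norm_sq)
    finally show ?thesis .
  qed
  have "(vec_norm (A *\<^sub>v v))^2 = (\<Sum>i<dim_row A. cmod ((A *\<^sub>v v) $ i) ^2)"
    by (simp add: vec_norm_sq)
  also have "\<dots> \<le> (\<Sum>i<dim_row A. (\<Sum>j<dim_col A. (cmod (A $$ (i,j)))^2) * (vec_norm v)^2)"
    by (rule sum_mono, rule row, simp)
  also have "\<dots> = (\<Sum>i<dim_row A. \<Sum>j<dim_col A. (cmod (A $$ (i,j)))^2) * (vec_norm v)^2"
    by (rule sum_distrib_right[symmetric])
  also have "\<dots> = (frob A * vec_norm v)^2"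
    unfolding frob_def power_mult_distrib by (simp add: sum_nonneg)
  finally show ?thesis
    by (rule power2_le_imp_le) (simp add: frob_def sum_nonneg vec_norm_nonneg)
qed

lemma frob_nonneg: "frob A \<ge> 0" by (simp add: frob_def sum_nonneg)

definition opS :: "complex mat \<Rightarrow> real set" where
  "opS A = {vec_norm (A *\<^sub>v v) | v. v \<in> carrier_vec (dim_col A) \<and> vec_norm v \<le> 1}"

lemma op_norm_opS: "op_norm A = Sup (opS A)" by (simp add: op_norm_def opS_def)

lemma opS_ne: "opS A \<noteq> {}"
  unfolding opS_def by (rule ex_in_conv[THEN iffD1], rule exI[of _ "vec_norm (A *\<^sub>v 0\<^sub>v (dim_col A))"], auto intro!: exI[of _ "0\<^sub>v (dim_col A)"])

lemma opS_bdd: "bdd_above (opS A)"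
  unfolding opS_def
proof (rule bdd_aboveI[of _ "frob A"], clarsimp)
  fix v :: "complex vec" assume "v \<in> carrier_vec (dim_col A)" "vec_norm v \<le> 1"
  then show "vec_norm (A *\<^sub>v v) \<le> frob A"
    using mult_vec_bound[of v A] mult_left_le[of "vec_norm v" "frob A", OF _ frob_nonneg] by simp
qed

lemma op_norm_nonneg: "op_norm A \<ge> 0"
proof -
  have "vec_norm (A *\<^sub>v 0\<^sub>v (dim_col A)) \<in> opS A" unfolding opS_def by auto
  moreover have "vec_norm (A *\<^sub>v 0\<^sub>v (dim_col A)) \<ge> 0" by (rule vec_norm_nonneg)
  ultimately show ?thesis unfolding op_norm_opS using cSup_upper[OF _ opS_bdd, of _ A] by (meson order_trans)
qed

lemma op_norm_bound: assumes "v \<in> carrier_vec (dim_col A)"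
  shows "vec_norm (A *\<^sub>v v) \<le> op_norm A * vec_norm v"
proof (cases "vec_norm v = 0")
  case True
  then have "v = 0\<^sub>v (dim_col A)" using vec_norm_eq_0[of v] assms by auto
  then have "A *\<^sub>v v = 0\<^sub>v (dim_row A)" by (intro eq_vecI) auto
  then show ?thesis by (simp add: vec_norm_nonneg op_norm_nonneg)
next
  case False
  then have pos: "vec_norm v > 0" using vec_norm_nonneg[of v] by simp
  define w where "w = (1 / of_real (vec_norm v)) \<cdot>\<^sub>v v"
  have wn: "vec_norm w = 1" using pos unfolding w_def vec_norm_smult by (simp add: norm_divide)
  have "vec_norm (A *\<^sub>v w) \<in> opS A" unfolding opS_def using wn assms w_def by auto
  then have "vec_norm (A *\<^sub>v w) \<le> op_norm A" unfolding op_norm_opS using opS_bdd by (rule cSup_upper)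
  moreover have "A *\<^sub>v w = (1 / of_real (vec_norm v)) \<cdot>\<^sub>v (A *\<^sub>v v)"
    unfolding w_def using assms by (intro mult_mat_vec[of A "dim_row A" "dim_col A"]) auto
  then have "vec_norm (A *\<^sub>v w) = vec_norm (A *\<^sub>v v) / vec_norm v"
    using pos by (simp add: vec_norm_smult norm_divide)
  ultimately show ?thesis using pos by (simp add: divide_le_eq mult.commute)
qed

lemma op_norm_le: assumes "c \<ge> 0" "\<And>v. v \<in> carrier_vec (dim_col A) \<Longrightarrow> vec_norm (A *\<^sub>v v) \<le> c * vec_norm v"
  shows "op_norm A \<le> c"
  unfolding op_norm_opS
proof (rule cSup_least[OF opS_ne])
  fix x assume "x \<in> opS A"
  then obtain v where v: "v \<in> carrier_vec (dim_col A)" "vec_norm v \<le> 1" "x = vec_norm (A *\<^sub>v v)"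
    unfolding opS_def by auto
  have "vec_norm (A *\<^sub>v v) \<le> c * vec_norm v" by (rule assms(2)[OF v(1)])
  also have "c * vec_norm v \<le> c" by (rule mult_left_le[OF v(2) assms(1)])
  finally show "x \<le> c" using v(3) by simp
qed

lemma op_norm_frob: "op_norm A \<le> frob A"
  by (rule op_norm_le[OF frob_nonneg mult_vec_bound])

lemma cnonneg_iff: "(0::complex) \<le> z \<longleftrightarrow> Im z = 0 \<and> Re z \<ge> 0"
  by (auto simp: less_eq_complex_def)

lemma cle_iff: "(a::complex) \<le> b \<longleftrightarrow> Im a = Im b \<and> Re a \<le> Re b"
  by (auto simp: less_eq_complex_def)

lemma conjugate_unit: "conjugate (unit_vec n i) = (unit_vec n i :: complex vec)"
  by (rule eq_vecI) (auto simp: unit_vec_def)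

lemma ip_unit_left: "i < n \<Longrightarrow> w \<in> carrier_vec n \<Longrightarrow> ip (unit_vec n i) w = w $ i"
  by (subst ip_conv) (auto simp: conjugate_unit)

lemma mat_unit_vec: "(A::complex mat) \<in> carrier_mat m n \<Longrightarrow> j < n \<Longrightarrow> i < m \<Longrightarrow> (A *\<^sub>v unit_vec n j) $ i = A $$ (i,j)"
  using scalar_prod_right_unit[of j n "row A i"] by simp

lemma ip_mat_unit: "(A::complex mat) \<in> carrier_mat m n \<Longrightarrow> j < n \<Longrightarrow> i < m \<Longrightarrow> ip (unit_vec m i) (A *\<^sub>v unit_vec n j) = A $$ (i,j)"
  by (subst ip_unit_left) auto

definition Q :: "complex mat \<Rightarrow> complex vec \<Rightarrow> complex" where
  "Q M v = ip v (M *\<^sub>v v)"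

lemma Q_add: assumes M: "M \<in> carrier_mat n n" and ab: "a \<in> carrier_vec n" "b \<in> carrier_vec n"
  shows "Q M (a + b) = Q M a + ip a (M *\<^sub>v b) + ip b (M *\<^sub>v a) + Q M b"
proof -
  have "M *\<^sub>v (a + b) = M *\<^sub>v a + M *\<^sub>v b" using M ab by (rule mult_add_distrib_mat_vec)
  then have "Q M (a + b) = ip (a + b) (M *\<^sub>v a) + ip (a + b) (M *\<^sub>v b)"
    unfolding Q_def using M ab by (simp add: ip_add_right[of _ n])
  also have "\<dots> = Q M a + ip a (M *\<^sub>v b) + ip b (M *\<^sub>v a) + Q M b"
    unfolding Q_def using M ab by (simp add: ip_add_left[of _ n])
  finally show ?thesis .
qed

lemma Q_smult: assumes M: "M \<in> carrier_mat n n" and b: "b \<in> carrier_vec n"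
  shows "Q M (c \<cdot>\<^sub>v b) = cnj c * c * Q M b"
proof -
  have "M *\<^sub>v (c \<cdot>\<^sub>v b) = c \<cdot>\<^sub>v (M *\<^sub>v b)" using M b by (rule mult_mat_vec)
  then show ?thesis unfolding Q_def using M b by (simp add: ip_smult_right ip_smult_left[of _ n])
qed

lemma ip_smult_M: assumes M: "M \<in> carrier_mat n n" and ab: "a \<in> carrier_vec n" "b \<in> carrier_vec n"
  shows "ip a (M *\<^sub>v (c \<cdot>\<^sub>v b)) = c * ip a (M *\<^sub>v b)"
    "ip (c \<cdot>\<^sub>v b) (M *\<^sub>v a) = cnj c * ip b (M *\<^sub>v a)"
proof -
  have "M *\<^sub>v (c \<cdot>\<^sub>v b) = c \<cdot>\<^sub>v (M *\<^sub>v b)" using M ab by (intro mult_mat_vec) auto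
  then show "ip a (M *\<^sub>v (c \<cdot>\<^sub>v b)) = c * ip a (M *\<^sub>v b)" by (simp add: ip_smult_right)
  show "ip (c \<cdot>\<^sub>v b) (M *\<^sub>v a) = cnj c * ip b (M *\<^sub>v a)" using M ab by (intro ip_smult_left[of _ n]) auto
qed

lemma Q_comb: assumes M: "M \<in> carrier_mat n n" and ab: "a \<in> carrier_vec n" "b \<in> carrier_vec n"
  shows "Q M (a + c \<cdot>\<^sub>v b) = Q M a + c * ip a (M *\<^sub>v b) + cnj c * ip b (M *\<^sub>v a) + cnj c * c * Q M b"
proof -
  have cb: "c \<cdot>\<^sub>v b \<in> carrier_vec n" using ab by simp
  show ?thesis
    unfolding Q_add[OF M ab(1) cb] Q_smult[OF M ab(2)] ip_smult_M[OF M ab] ..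
qed

lemma polarization: assumes M: "M \<in> carrier_mat n n" and Z: "\<And>v. v \<in> carrier_vec n \<Longrightarrow> Q M v = 0"
  shows "M = 0\<^sub>m n n"
proof (rule eq_matI)
  fix i j assume ij: "i < dim_row (0\<^sub>m n n :: complex mat)" "j < dim_col (0\<^sub>m n n :: complex mat)"
  then have i: "i < n" and j: "j < n" by auto
  let ?a = "unit_vec n i" and ?b = "unit_vec n j"
  have a: "?a \<in> carrier_vec n" and b: "?b \<in> carrier_vec n" by auto
  have 1: "ip ?a (M *\<^sub>v ?b) + ip ?b (M *\<^sub>v ?a) = 0"
    using Q_comb[OF M a b, of 1] Z[of "?a + 1 \<cdot>\<^sub>v ?b"] Z[OF a] Z[OF b] a b by simp
  have 2: "\<i> * ip ?a (M *\<^sub>v ?b) - \<i> * ip ?b (M *\<^sub>v ?a) = 0"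
    using Q_comb[OF M a b, of \<i>] Z[of "?a + \<i> \<cdot>\<^sub>v ?b"] Z[OF a] Z[OF b] a b by simp
  from 2 have "\<i> * (ip ?a (M *\<^sub>v ?b) - ip ?b (M *\<^sub>v ?a)) = 0" by (simp add: right_diff_distrib)
  then have 3: "ip ?a (M *\<^sub>v ?b) - ip ?b (M *\<^sub>v ?a) = 0" by simp
  have "2 * ip ?a (M *\<^sub>v ?b) = (ip ?a (M *\<^sub>v ?b) + ip ?b (M *\<^sub>v ?a)) + (ip ?a (M *\<^sub>v ?b) - ip ?b (M *\<^sub>v ?a))"
    by simp
  then have "ip ?a (M *\<^sub>v ?b) = 0" using 1 3 by simp
  then show "M $$ (i, j) = 0\<^sub>m n n $$ (i, j)" using ip_mat_unit[OF M j i] i j by simp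
qed (use M in auto)

declare minus_carrier_mat[simp]

lemma mvi: "A \<in> carrier_mat m n \<Longrightarrow> v \<in> carrier_vec n \<Longrightarrow> i < m \<Longrightarrow> (A *\<^sub>v v) $ i = (\<Sum>j<n. A $$ (i,j) * v $ j)"
  by (simp add: scalar_prod_def atLeast0LessThan)

lemma Q_sum: "M \<in> carrier_mat n n \<Longrightarrow> v \<in> carrier_vec n \<Longrightarrow> Q M v = (\<Sum>i<n. cnj (v $ i) * (\<Sum>j<n. M $$ (i,j) * v $ j))"
  unfolding Q_def ip_def using mvi[of M n n v] by simp

lemma adjmul_idx: "B \<in> carrier_mat m N \<Longrightarrow> i < N \<Longrightarrow> j < N \<Longrightarrow>
   (mat_adjoint B * B) $$ (i,j) = (\<Sum>k<m. cnj (B $$ (k,i)) * B $$ (k,j))"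
  by (simp add: scalar_prod_def atLeast0LessThan)

lemma Q_adj: assumes "M \<in> carrier_mat n n" "v \<in> carrier_vec n"
  shows "Q (mat_adjoint M) v = cnj (Q M v)"
proof -
  have "Q (mat_adjoint M) v = ip (mat_adjoint (mat_adjoint M) *\<^sub>v v) v"
    unfolding Q_def using assms by (intro ip_adj[of _ n n]) auto
  also have "\<dots> = cnj (Q M v)" unfolding Q_def using assms by (simp add: ip_cnj[of _ n])
  finally show ?thesis .
qed

lemma Q_minus: assumes "M \<in> carrier_mat n n" "N \<in> carrier_mat n n" "v \<in> carrier_vec n"
  shows "Q (M - N) v = Q M v - Q N v"
proof -
  have "(M - N) *\<^sub>v v = M *\<^sub>v v - N *\<^sub>v v" using assms by (intro minus_mult_distrib_mat_vec) auto
  then show ?thesis unfolding Q_def using assms by (simp add: ip_minus_right[of _ n])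
qed

lemma Q_plus: assumes "M \<in> carrier_mat n n" "N \<in> carrier_mat n n" "v \<in> carrier_vec n"
  shows "Q (M + N) v = Q M v + Q N v"
proof -
  have "(M + N) *\<^sub>v v = M *\<^sub>v v + N *\<^sub>v v" using assms by (intro add_mult_distrib_mat_vec) auto
  then show ?thesis unfolding Q_def using assms by (simp add: ip_add_right[of _ n])
qed

lemma Q_smult_mat: assumes "M \<in> carrier_mat n n" "v \<in> carrier_vec n"
  shows "Q (c \<cdot>\<^sub>m M) v = c * Q M v"
proof -
  have "(c \<cdot>\<^sub>m M) *\<^sub>v v = c \<cdot>\<^sub>v (M *\<^sub>v v)" using assms by (intro eq_vecI) (auto simp: mvi sum_distrib_left mult.assoc)
  then show ?thesis unfolding Q_def by (simp add: ip_smult_right)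
qed

lemma Q_one: "v \<in> carrier_vec n \<Longrightarrow> Q (1\<^sub>m n) v = of_real ((vec_norm v)^2)"
  unfolding Q_def by (simp add: ip_self)

lemma mat_eq_from_diff: assumes "M \<in> carrier_mat n n" "N \<in> carrier_mat n n" "M - N = 0\<^sub>m n n"
  shows "M = (N :: complex mat)"
proof (rule eq_matI)
  fix i j assume "i < dim_row N" "j < dim_col N"
  then have "(M - N) $$ (i,j) = 0" using assms by simp
  then have "M $$ (i,j) - N $$ (i,j) = 0" using \<open>i < dim_row N\<close> \<open>j < dim_col N\<close> by simp
  then show "M $$ (i,j) = N $$ (i,j)" using assms \<open>i < dim_row N\<close> \<open>j < dim_col N\<close> by simp
qed (use assms in auto)

lemma herm_of_real: assumes M: "M \<in> carrier_mat n n" and R: "\<And>v. v \<in> carrier_vec n \<Longrightarrow> Im (Q M v) = 0"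
  shows "mat_adjoint M = M"
proof -
  have "M - mat_adjoint M = 0\<^sub>m n n"
  proof (rule polarization)
    show "M - mat_adjoint M \<in> carrier_mat n n" using M by simp
    fix v :: "complex vec" assume v: "v \<in> carrier_vec n"
    have "Q (M - mat_adjoint M) v = Q M v - cnj (Q M v)"
      using M v by (simp add: Q_minus[of _ n] Q_adj)
    also have "\<dots> = 0" using R[OF v] by (simp add: complex_eq_iff)
    finally show "Q (M - mat_adjoint M) v = 0" .
  qed
  then show ?thesis using mat_eq_from_diff[of M n "mat_adjoint M"] M by simp
qed

definition fpos :: "nat \<Rightarrow> complex mat \<Rightarrow> bool" where
  "fpos n A \<longleftrightarrow> A \<in> carrier_mat n n \<and> (\<forall>v\<in>carrier_vec n. 0 \<le> Q A v)"

lemma fpos_herm: "fpos n A \<Longrightarrow> mat_adjoint A = A"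
  unfolding fpos_def by (intro herm_of_real[of _ n]) (auto simp: cnonneg_iff)

lemma herm_idx: "mat_adjoint A = A \<Longrightarrow> A \<in> carrier_mat n n \<Longrightarrow> i < n \<Longrightarrow> j < n \<Longrightarrow> A $$ (j,i) = cnj (A $$ (i,j))"
  by (metis adj_index carrier_matD(1) carrier_matD(2))

lemma zero_diag: assumes F: "fpos n M" and i: "i < n" and j: "j < n" and z: "M $$ (i,i) = 0"
  shows "M $$ (i,j) = 0"
proof (rule ccontr)
  assume nz: "M $$ (i,j) \<noteq> 0"
  have M: "M \<in> carrier_mat n n" using F by (simp add: fpos_def)
  have H: "mat_adjoint M = M" using F by (rule fpos_herm)
  let ?p = "M $$ (i,j)"
  let ?a = "unit_vec n j" and ?b = "unit_vec n i"
  define r where "r = (Re (M $$ (j,j)) + 1) / (2 * (cmod ?p)^2)"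
  define t where "t = - of_real r * ?p"
  have a: "?a \<in> carrier_vec n" and b: "?b \<in> carrier_vec n" by auto
  have "0 \<le> Q M (?a + t \<cdot>\<^sub>v ?b)" using F a b unfolding fpos_def by simp
  also have "Q M (?a + t \<cdot>\<^sub>v ?b) = M $$ (j,j) + t * M $$ (j,i) + cnj t * M $$ (i,j) + cnj t * t * M $$ (i,i)"
    unfolding Q_comb[OF M a b] using M i j by (simp add: Q_def ip_mat_unit)
  also have "M $$ (j,i) = cnj ?p" using herm_idx[OF H M i j] .
  finally have ge: "0 \<le> M $$ (j,j) - of_real (2 * r * (cmod ?p)^2)"
    unfolding t_def z using complex_norm_square by (simp add: algebra_simps)
  have "2 * r * (cmod ?p)^2 = Re (M $$ (j,j)) + 1" using nz unfolding r_def by simp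
  then have "Re (M $$ (j,j) - of_real (2 * r * (cmod ?p)^2)) = -1" by simp
  with ge show False by (simp add: cnonneg_iff)
qed

lemma chol_step_form:
  assumes F: "fpos (Suc m) A" and w: "w \<in> carrier_vec m"
  defines "a \<equiv> A $$ (0,0)"
  defines "S \<equiv> mat m m (\<lambda>(i,j). A $$ (Suc i, Suc j) - A $$ (Suc i, 0) * A $$ (0, Suc j) / a)"
  shows "0 \<le> Q S w"
proof -
  have A: "A \<in> carrier_mat (Suc m) (Suc m)" using F by (simp add: fpos_def)
  define c where "c = (\<Sum>j<m. A $$ (0, Suc j) * w $ j)"
  define u0 where "u0 = - c / a"
  define z where "z = vec (Suc m) (\<lambda>i. if i = 0 then u0 else w $ (i - 1))"
  have z: "z \<in> carrier_vec (Suc m)" by (simp add: z_def)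
  have inner: "(\<Sum>j<Suc m. A $$ (i,j) * z $ j) = A $$ (i,0) * u0 + (\<Sum>j<m. A $$ (i, Suc j) * w $ j)" for i
    unfolding sum.lessThan_Suc_shift by (simp add: z_def)
  have i0: "cnj (z $ 0) * (\<Sum>j<Suc m. A $$ (0,j) * z $ j) = 0"
  proof -
    have e: "(\<Sum>j<Suc m. A $$ (0,j) * z $ j) = a * u0 + c" unfolding inner by (simp add: a_def c_def)
    have z0: "z $ 0 = u0" by (simp add: z_def)
    show ?thesis
    proof (cases "a = 0")
      case True then show ?thesis unfolding z0 by (simp add: u0_def)
    next
      case False then show ?thesis unfolding e by (simp add: u0_def)
    qed
  qed
  have iS: "(\<Sum>j<Suc m. A $$ (Suc i,j) * z $ j) = (\<Sum>j<m. S $$ (i,j) * w $ j)" if i: "i < m" for i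
  proof -
    have "(\<Sum>j<m. S $$ (i,j) * w $ j) = (\<Sum>j<m. A $$ (Suc i, Suc j) * w $ j - A $$ (Suc i, 0) / a * (A $$ (0, Suc j) * w $ j))"
      using i by (intro sum.cong refl) (simp add: S_def algebra_simps)
    also have "\<dots> = (\<Sum>j<m. A $$ (Suc i, Suc j) * w $ j) - A $$ (Suc i, 0) / a * c"
      unfolding sum_subtractf c_def sum_distrib_left ..
    finally show ?thesis unfolding inner u0_def by (simp add: algebra_simps)
  qed
  have "Q A z = cnj (z $ 0) * (\<Sum>j<Suc m. A $$ (0,j) * z $ j) + (\<Sum>i<m. cnj (z $ Suc i) * (\<Sum>j<Suc m. A $$ (Suc i,j) * z $ j))"
    unfolding Q_sum[OF A z] sum.lessThan_Suc_shift ..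
  also have "\<dots> = (\<Sum>i<m. cnj (w $ i) * (\<Sum>j<m. S $$ (i,j) * w $ j))"
    unfolding i0 add_0_left
  proof (rule sum.cong[OF refl])
    fix i assume "i \<in> {..<m}"
    then have i: "i < m" by simp
    have zi: "z $ Suc i = w $ i" using i by (simp add: z_def)
    show "cnj (z $ Suc i) * (\<Sum>j<Suc m. A $$ (Suc i,j) * z $ j) = cnj (w $ i) * (\<Sum>j<m. S $$ (i,j) * w $ j)"
      by (simp only: zi iS[OF i])
  qed
  also have "\<dots> = Q S w" by (rule Q_sum[symmetric]) (simp_all add: S_def w)
  finally show ?thesis using F z unfolding fpos_def by auto
qed

lemma cholesky: "fpos n A \<Longrightarrow> psd_mat n A"
proof (induction n arbitrary: A)
  case 0
  then have A: "A \<in> carrier_mat 0 0" by (simp add: fpos_def)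
  show ?case unfolding psd_mat_def
    by (rule conjI[OF A], rule bexI[of _ "0\<^sub>m 0 0"], rule eq_matI) (use A in auto)
next
  case (Suc m)
  note F = Suc.prems
  have A: "A \<in> carrier_mat (Suc m) (Suc m)" using F by (simp add: fpos_def)
  have H: "mat_adjoint A = A" using F by (rule fpos_herm)
  define a where "a = A $$ (0,0)"
  define S where "S = mat m m (\<lambda>(i,j). A $$ (Suc i, Suc j) - A $$ (Suc i, 0) * A $$ (0, Suc j) / a)"
  have "fpos m S" unfolding fpos_def
    using chol_step_form[OF F] by (auto simp: S_def a_def)
  then have "psd_mat m S" by (rule Suc.IH)
  then obtain R where R: "R \<in> carrier_mat m m" and SR: "S = mat_adjoint R * R" unfolding psd_mat_def by auto
  have "0 \<le> Q A (unit_vec (Suc m) 0)" using F unfolding fpos_def by auto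
  then have a0: "0 \<le> a" using ip_mat_unit[OF A, of 0 0] by (simp add: Q_def a_def)
  define \<alpha> where "\<alpha> = Re a"
  have a\<alpha>: "a = of_real \<alpha>" using a0 by (simp add: \<alpha>_def cnonneg_iff complex_eq_iff)
  have \<alpha>0: "\<alpha> \<ge> 0" using a0 by (simp add: \<alpha>_def cnonneg_iff)
  define s where "s = sqrt \<alpha>"
  have ss: "of_real s * of_real s = a" using \<alpha>0 a\<alpha> by (simp add: s_def flip: of_real_mult)
  define B where "B = mat (Suc m) (Suc m) (\<lambda>(i,j). if i = 0 then (if j = 0 then of_real s else A $$ (0,j) / of_real s)
      else (if j = 0 then 0 else R $$ (i-1,j-1)))"
  have B: "B \<in> carrier_mat (Suc m) (Suc m)" by (simp add: B_def)
  have hA: "A $$ (j,i) = cnj (A $$ (i,j))" if "i < Suc m" "j < Suc m" for i j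
    using herm_idx[OF H A that] .
  have zrow: "A $$ (0,j) = 0" if "s = 0" "j < Suc m" for j
    using zero_diag[OF F _ that(2), of 0] that \<alpha>0 a\<alpha> by (simp add: s_def a_def)
  have "A = mat_adjoint B * B"
  proof (rule eq_matI)
    fix i j assume "i < dim_row (mat_adjoint B * B)" "j < dim_col (mat_adjoint B * B)"
    then have i: "i < Suc m" and j: "j < Suc m" using B by auto
    have e: "(mat_adjoint B * B) $$ (i,j) = cnj (B $$ (0,i)) * B $$ (0,j) + (\<Sum>k<m. cnj (B $$ (Suc k,i)) * B $$ (Suc k,j))"
      unfolding adjmul_idx[OF B i j] sum.lessThan_Suc_shift ..
    show "A $$ (i,j) = (mat_adjoint B * B) $$ (i,j)"
    proof (cases i)
      case 0
      show ?thesis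
      proof (cases j)
        case 0
        then show ?thesis using \<open>i = 0\<close> e ss by (simp add: B_def a_def)
      next
        case (Suc j')
        then show ?thesis using \<open>i = 0\<close> e j zrow[of j] by (cases "s = 0") (auto simp: B_def)
      qed
    next
      case (Suc i')
      show ?thesis
      proof (cases j)
        case 0
        then show ?thesis using \<open>i = Suc i'\<close> e i zrow[of i] hA[of 0 i] by (cases "s = 0") (auto simp: B_def)
      next
        case (Suc j')
        have i'j': "i' < m" "j' < m" using i j \<open>i = Suc i'\<close> \<open>j = Suc j'\<close> by auto
        have RR0: "S $$ (i',j') = (\<Sum>k<m. cnj (R $$ (k,i')) * R $$ (k,j'))"
          unfolding SR by (rule adjmul_idx[OF R i'j'])
        have RR: "(\<Sum>k<m. cnj (B $$ (Suc k,i)) * B $$ (Suc k,j)) = S $$ (i', j')"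
          unfolding RR0 using R i'j' \<open>i = Suc i'\<close> \<open>j = Suc j'\<close> by (simp add: B_def)
        have "cnj (B $$ (0,i)) * B $$ (0,j) = cnj (A $$ (0,i)) * A $$ (0,j) / (of_real s * of_real s)"
          using i j \<open>i = Suc i'\<close> \<open>j = Suc j'\<close> by (simp add: B_def)
        also have "\<dots> = A $$ (i,0) * A $$ (0,j) / a" unfolding ss using hA[of 0 i] i by simp
        finally show ?thesis unfolding e RR using i j \<open>i = Suc i'\<close> \<open>j = Suc j'\<close> by (simp add: S_def)
      qed
    qed
  qed (use B A in auto)
  then show ?case unfolding psd_mat_def using A B by auto
qed

lemma mul_car[simp]: "(x::complex mat) \<in> carrier_mat n n \<Longrightarrow> y \<in> carrier_mat n n \<Longrightarrow> x * y \<in> carrier_mat n n"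
  by (rule mult_carrier_mat)

lemma psd_fpos: assumes "psd_mat n A" shows "fpos n A"
proof -
  obtain B where B: "B \<in> carrier_mat n n" and AB: "A = mat_adjoint B * B" and A: "A \<in> carrier_mat n n"
    using assms unfolding psd_mat_def by auto
  have "0 \<le> Q A v" if v: "v \<in> carrier_vec n" for v
  proof -
    have "A *\<^sub>v v = mat_adjoint B *\<^sub>v (B *\<^sub>v v)" unfolding AB using B v by (simp add: assoc_mult_mat_vec[of _ n n _ n])
    then have "Q A v = ip (mat_adjoint (mat_adjoint B) *\<^sub>v v) (B *\<^sub>v v)"
      unfolding Q_def using B v by (simp add: ip_adj[of _ n n])
    also have "\<dots> = of_real ((vec_norm (B *\<^sub>v v))^2)" using B v by (simp add: ip_self)
    finally show ?thesis by (simp add: cnonneg_iff)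
  qed
  then show ?thesis unfolding fpos_def using A by auto
qed

lemma fpos_psd_iff: "fpos n A \<longleftrightarrow> psd_mat n A"
  using psd_fpos cholesky by blast

lemma block_of_id: "X \<in> carrier_mat n n \<Longrightarrow> block_of n X 0 0 = X"
  unfolding block_of_def by (rule eq_matI) auto

lemma ampl1: assumes "X \<in> carrier_mat n n" "\<theta> X \<in> carrier_mat n n"
  shows "ampl n 1 \<theta> X = \<theta> X"
  unfolding ampl_def using assms by (intro eq_matI) (auto simp: block_of_id)

lemma dm2: assumes "(n::nat) \<le> i" "i < 2 * n" shows "i div n = 1" "i mod n = i - n"
proof -
  have n: "0 < n" and l: "i - n < n" using assms by auto
  show "i div n = 1" using le_div_geq[OF n assms(1)] div_less[OF l] by simp
  show "i mod n = i - n" using le_mod_geq[OF assms(1)] mod_less[OF l] by simp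
qed

lemma block_of_fb:
  assumes "A \<in> carrier_mat n n" "B \<in> carrier_mat n n" "C \<in> carrier_mat n n" "D \<in> carrier_mat n n"
  shows "block_of n (four_block_mat A B C D) 0 0 = A" "block_of n (four_block_mat A B C D) 0 (Suc 0) = B"
        "block_of n (four_block_mat A B C D) (Suc 0) 0 = C" "block_of n (four_block_mat A B C D) (Suc 0) (Suc 0) = D"
  unfolding block_of_def using assms by (auto intro!: eq_matI)

lemma ampl2_fb:
  assumes c: "A \<in> carrier_mat n n" "B \<in> carrier_mat n n" "C \<in> carrier_mat n n" "D \<in> carrier_mat n n"
  and t: "\<theta> A \<in> carrier_mat n n" "\<theta> B \<in> carrier_mat n n" "\<theta> C \<in> carrier_mat n n" "\<theta> D \<in> carrier_mat n n"
  shows "ampl n 2 \<theta> (four_block_mat A B C D) = four_block_mat (\<theta> A) (\<theta> B) (\<theta> C) (\<theta> D)"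
proof (rule eq_matI)
  fix i j assume ij: "i < dim_row (four_block_mat (\<theta> A) (\<theta> B) (\<theta> C) (\<theta> D))"
      "j < dim_col (four_block_mat (\<theta> A) (\<theta> B) (\<theta> C) (\<theta> D))"
  then have i: "i < 2 * n" and j: "j < 2 * n" using t by auto
  show "ampl n 2 \<theta> (four_block_mat A B C D) $$ (i, j) = four_block_mat (\<theta> A) (\<theta> B) (\<theta> C) (\<theta> D) $$ (i, j)"
  proof (cases "i < n")
    case True
    then have i0: "i div n = 0" "i mod n = i" by auto
    show ?thesis
    proof (cases "j < n")
      case True
      then have "j div n = 0" "j mod n = j" by auto
      then show ?thesis using i0 i j \<open>i < n\<close> True c t by (simp add: ampl_def block_of_fb)
    next
      case False
      then have "j div n = 1" "j mod n = j - n" using dm2[of n j] j by auto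
      then show ?thesis using i0 i j \<open>i < n\<close> False c t by (simp add: ampl_def block_of_fb)
    qed
  next
    case False
    then have i0: "i div n = 1" "i mod n = i - n" using dm2[of n i] i by auto
    show ?thesis
    proof (cases "j < n")
      case True
      then have "j div n = 0" "j mod n = j" by auto
      then show ?thesis using i0 i j False True c t by (simp add: ampl_def block_of_fb)
    next
      case False
      then have "j div n = 1" "j mod n = j - n" using dm2[of n j] j by auto
      then show ?thesis using i0 i j \<open>\<not> i < n\<close> False c t by (simp add: ampl_def block_of_fb)
    qed
  qed
qed (use t in \<open>auto simp: ampl_def\<close>)

locale ucp =
  fixes n :: nat and \<theta> :: "complex mat \<Rightarrow> complex mat"
  assumes lin: "lin_map_on n \<theta>" and unit: "\<theta> (1\<^sub>m n) = 1\<^sub>m n"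
    and cp1: "\<And>X. psd_mat n X \<Longrightarrow> psd_mat n (ampl n 1 \<theta> X)"
    and cp2: "\<And>X. psd_mat (2*n) X \<Longrightarrow> psd_mat (2*n) (ampl n 2 \<theta> X)"
begin

lemma car[simp]: "A \<in> carrier_mat n n \<Longrightarrow> \<theta> A \<in> carrier_mat n n"
  using lin unfolding lin_map_on_def by auto

lemma dimr[simp]: "A \<in> carrier_mat n n \<Longrightarrow> dim_row (\<theta> A) = n"
  by (rule carrier_matD(1)[OF car])
lemma dimc[simp]: "A \<in> carrier_mat n n \<Longrightarrow> dim_col (\<theta> A) = n"
  by (rule carrier_matD(2)[OF car])

lemma car2[simp]: "x \<in> carrier_mat n n \<Longrightarrow> y \<in> carrier_mat n n \<Longrightarrow> \<theta> (x * y) \<in> carrier_mat n n"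
  by (rule car) (rule mult_carrier_mat)

lemma car3[simp]: "x \<in> carrier_mat n n \<Longrightarrow> y \<in> carrier_mat n n \<Longrightarrow> \<theta> (mat_adjoint x * y) \<in> carrier_mat n n"
  by (rule car) (rule mult_carrier_mat, auto)

lemma add: "A \<in> carrier_mat n n \<Longrightarrow> B \<in> carrier_mat n n \<Longrightarrow> \<theta> (A + B) = \<theta> A + \<theta> B"
  using lin unfolding lin_map_on_def by auto

lemma smult: "A \<in> carrier_mat n n \<Longrightarrow> \<theta> (c \<cdot>\<^sub>m A) = c \<cdot>\<^sub>m \<theta> A"
  using lin unfolding lin_map_on_def by auto

lemma zero: "\<theta> (0\<^sub>m n n) = 0\<^sub>m n n"
proof -
  have "\<theta> (0\<^sub>m n n) = \<theta> (0 \<cdot>\<^sub>m 0\<^sub>m n n)" by simp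
  also have "\<dots> = 0 \<cdot>\<^sub>m \<theta> (0\<^sub>m n n)" by (rule smult) simp
  also have "\<dots> = 0\<^sub>m n n"
  proof -
    have c0: "\<theta> (0\<^sub>m n n) \<in> carrier_mat n n" by simp
    show ?thesis by (rule eq_matI) (use c0 in auto)
  qed
  finally show ?thesis .
qed

lemma minus: assumes "A \<in> carrier_mat n n" "B \<in> carrier_mat n n" shows "\<theta> (A - B) = \<theta> A - \<theta> B"
proof -
  have "A - B = A + (-1) \<cdot>\<^sub>m B" using assms by (intro eq_matI) auto
  then have "\<theta> (A - B) = \<theta> A + (-1) \<cdot>\<^sub>m \<theta> B" using assms by (simp add: add smult)
  also have "\<dots> = \<theta> A - \<theta> B" using assms car[of A] car[of B] by (intro eq_matI) auto
  finally show ?thesis .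
qed

lemma pos: "fpos n A \<Longrightarrow> fpos n (\<theta> A)"
proof -
  assume F: "fpos n A"
  then have A: "A \<in> carrier_mat n n" by (simp add: fpos_def)
  have "psd_mat n (ampl n 1 \<theta> A)" using cp1 cholesky[OF F] by blast
  then show ?thesis using ampl1[of A n \<theta>] A by (simp add: fpos_psd_iff)
qed

definition X1 :: "complex mat \<Rightarrow> complex mat" where
  "X1 x = four_block_mat (1\<^sub>m n) x (mat_adjoint x) (mat_adjoint x * x)"

lemma X1_psd: assumes x: "x \<in> carrier_mat n n" shows "psd_mat (2*n) (X1 x)"
proof -
  define B where "B = four_block_mat (1\<^sub>m n) x (0\<^sub>m n n) (0\<^sub>m n n)"
  have B: "B \<in> carrier_mat (2*n) (2*n)" unfolding B_def using x by (simp add: mult_2)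
  have AB: "mat_adjoint B = four_block_mat (1\<^sub>m n) (0\<^sub>m n n) (mat_adjoint x) (0\<^sub>m n n)"
    unfolding B_def using x by (subst adj_four_block[of "1\<^sub>m n" n n x n "0\<^sub>m n n" n "0\<^sub>m n n"]) auto
  have "mat_adjoint B * B = X1 x"
    unfolding AB unfolding X1_def B_def using x
    by (subst mult_four_block_mat[of "1\<^sub>m n" n n "0\<^sub>m n n" n "mat_adjoint x" n "0\<^sub>m n n" "1\<^sub>m n" n x n "0\<^sub>m n n" "0\<^sub>m n n"]) auto
  then have e: "X1 x = mat_adjoint B * B" by simp
  have "mat_adjoint B * B \<in> carrier_mat (2*n) (2*n)" using B by (intro mult_carrier_mat) auto
  then show ?thesis unfolding psd_mat_def e using B by blast
qed

lemma ampl_X1: assumes x: "x \<in> carrier_mat n n"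
  shows "ampl n 2 \<theta> (X1 x) = four_block_mat (1\<^sub>m n) (\<theta> x) (\<theta> (mat_adjoint x)) (\<theta> (mat_adjoint x * x))"
  unfolding X1_def using x by (subst ampl2_fb) (auto simp: unit)

lemma adj: assumes x: "x \<in> carrier_mat n n" shows "\<theta> (mat_adjoint x) = mat_adjoint (\<theta> x)"
proof -
  let ?M = "four_block_mat (1\<^sub>m n) (\<theta> x) (\<theta> (mat_adjoint x)) (\<theta> (mat_adjoint x * x))"
  have "psd_mat (2*n) (ampl n 2 \<theta> (X1 x))" by (rule cp2[OF X1_psd[OF x]])
  then have "psd_mat (2*n) ?M" unfolding ampl_X1[OF x] .
  then have H: "mat_adjoint ?M = ?M" using psd_fpos fpos_herm by blast
  have M: "?M \<in> carrier_mat (2*n) (2*n)" using x unfolding mult_2 by (intro four_block_carrier_mat) auto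
  show ?thesis
  proof (rule eq_matI)
    fix i j assume "i < dim_row (mat_adjoint (\<theta> x))" "j < dim_col (mat_adjoint (\<theta> x))"
    then have i: "i < n" and j: "j < n" using car[OF x] by auto
    have "?M $$ (n + i, j) = cnj (?M $$ (j, n + i))" using herm_idx[OF H M, of j "n+i"] i j by simp
    then show "\<theta> (mat_adjoint x) $$ (i, j) = mat_adjoint (\<theta> x) $$ (i, j)" using i j x by simp
  qed (use car[OF x] car[of "mat_adjoint x"] x in auto)
qed

lemma schwarz: assumes x: "x \<in> carrier_mat n n"
  shows "fpos n (\<theta> (mat_adjoint x * x) - mat_adjoint (\<theta> x) * \<theta> x)"
proof -
  let ?y = "\<theta> x" and ?w = "\<theta> (mat_adjoint x * x)"
  have y: "?y \<in> carrier_mat n n" and w: "?w \<in> carrier_mat n n" using x by auto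
  let ?M = "four_block_mat (1\<^sub>m n) ?y (mat_adjoint ?y) ?w"
  have "psd_mat (2*n) (ampl n 2 \<theta> (X1 x))" by (rule cp2[OF X1_psd[OF x]])
  then have "psd_mat (2*n) ?M" unfolding ampl_X1[OF x] adj[OF x] .
  then have F: "fpos (2*n) ?M" by (rule psd_fpos)
  have "0 \<le> Q (?w - mat_adjoint ?y * ?y) v" if v: "v \<in> carrier_vec n" for v
  proof -
    let ?u = "(-1) \<cdot>\<^sub>v (?y *\<^sub>v v)"
    have yv: "?y *\<^sub>v v \<in> carrier_vec n" by (rule mult_mat_vec_carrier[OF y v])
    have u: "?u \<in> carrier_vec n" unfolding smult_carrier_vec by (rule yv)
    have z: "?u @\<^sub>v v \<in> carrier_vec (2*n)" unfolding mult_2 by (rule append_carrier_vec[OF u v])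
    have "?M *\<^sub>v (?u @\<^sub>v v) = (1\<^sub>m n *\<^sub>v ?u + ?y *\<^sub>v v) @\<^sub>v (mat_adjoint ?y *\<^sub>v ?u + ?w *\<^sub>v v)"
      by (rule four_block_mat_mult_vec[OF one_carrier_mat y adj_carrier[OF y] w u v])
    also have "1\<^sub>m n *\<^sub>v ?u + ?y *\<^sub>v v = 0\<^sub>v n"
    proof -
      have cancel: "\<And>a::complex vec. a \<in> carrier_vec n \<Longrightarrow> (-1) \<cdot>\<^sub>v a + a = 0\<^sub>v n" by (intro eq_vecI) auto
      have one: "1\<^sub>m n *\<^sub>v ?u = ?u" using u by (rule one_mult_mat_vec)
      show ?thesis unfolding one by (rule cancel[OF yv])
    qed
    also have "mat_adjoint ?y *\<^sub>v ?u = (-1) \<cdot>\<^sub>v (mat_adjoint ?y *\<^sub>v (?y *\<^sub>v v))"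
      by (rule mult_mat_vec[OF adj_carrier[OF y] yv])
    finally have Mz: "?M *\<^sub>v (?u @\<^sub>v v) = 0\<^sub>v n @\<^sub>v ((-1) \<cdot>\<^sub>v (mat_adjoint ?y *\<^sub>v (?y *\<^sub>v v)) + ?w *\<^sub>v v)" .
    let ?a = "mat_adjoint ?y *\<^sub>v (?y *\<^sub>v v)"
    have ayy: "?a \<in> carrier_vec n" by (rule mult_mat_vec_carrier[OF adj_carrier[OF y] yv])
    have wv: "?w *\<^sub>v v \<in> carrier_vec n" by (rule mult_mat_vec_carrier[OF w v])
    have ma: "(-1) \<cdot>\<^sub>v ?a \<in> carrier_vec n" unfolding smult_carrier_vec by (rule ayy)
    have r: "(-1) \<cdot>\<^sub>v ?a + ?w *\<^sub>v v \<in> carrier_vec n" by (rule add_carrier_vec[OF ma wv])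
    have yy: "mat_adjoint ?y * ?y \<in> carrier_mat n n" by (rule mult_carrier_mat[OF adj_carrier[OF y] y])
    have "Q ?M (?u @\<^sub>v v) = ip ?u (0\<^sub>v n) + ip v ((-1) \<cdot>\<^sub>v ?a + ?w *\<^sub>v v)"
      unfolding Q_def Mz by (rule ip_append[OF u zero_carrier_vec v r])
    also have "\<dots> = (-1) * ip v ?a + ip v (?w *\<^sub>v v)"
      unfolding ip_zero_right ip_add_right[OF v ma wv] ip_smult_right by simp
    also have "ip v ?a = Q (mat_adjoint ?y * ?y) v"
      unfolding Q_def assoc_mult_mat_vec[OF adj_carrier[OF y] y v] ..
    also have "(-1) * Q (mat_adjoint ?y * ?y) v + ip v (?w *\<^sub>v v) = Q (?w - mat_adjoint ?y * ?y) v"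
      unfolding Q_minus[OF w yy v] by (simp add: Q_def)
    finally have "Q ?M (?u @\<^sub>v v) = Q (?w - mat_adjoint ?y * ?y) v" .
    moreover have "0 \<le> Q ?M (?u @\<^sub>v v)" using F z unfolding fpos_def by blast
    ultimately show ?thesis by simp
  qed
  moreover have "?w - mat_adjoint ?y * ?y \<in> carrier_mat n n" by (rule minus_carrier_mat[OF mult_carrier_mat[OF adj_carrier[OF y] y]])
  ultimately show ?thesis unfolding fpos_def by blast
qed

end

lemma cp_ucp: assumes "completely_positive n \<theta>" "\<theta> (1\<^sub>m n) = 1\<^sub>m n" shows "ucp n \<theta>"
proof
  show "lin_map_on n \<theta>" using assms unfolding completely_positive_def by auto
  show "\<theta> (1\<^sub>m n) = 1\<^sub>m n" by fact
  fix X
  have "\<forall>X. psd_mat (1*n) X \<longrightarrow> psd_mat (1*n) (ampl n 1 \<theta> X)" using assms unfolding completely_positive_def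
    by blast
  then show "psd_mat n X \<Longrightarrow> psd_mat n (ampl n 1 \<theta> X)" by simp
  show "psd_mat (2*n) X \<Longrightarrow> psd_mat (2*n) (ampl n 2 \<theta> X)" using assms unfolding completely_positive_def
    by blast
qed

lemma Q_transpose: assumes M: "M \<in> carrier_mat n n" and v: "v \<in> carrier_vec n"
  shows "Q (transpose_mat M) v = Q M (conjugate v)"
proof -
  have "Q (transpose_mat M) v = (\<Sum>i<n. \<Sum>j<n. cnj (v $ i) * (M $$ (j,i) * v $ j))"
    unfolding Q_sum[OF transpose_carrier_mat[THEN iffD2, OF M] v] sum_distrib_left
    using M by (intro sum.cong refl) auto
  also have "\<dots> = (\<Sum>j<n. \<Sum>i<n. cnj (v $ i) * (M $$ (j,i) * v $ j))" by (rule sum.swap)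
  also have "\<dots> = Q M (conjugate v)"
    unfolding Q_sum[OF M carrier_vec_conjugate[OF v]] sum_distrib_left
    using v by (intro sum.cong refl) (simp add: mult.commute mult.left_commute)
  finally show ?thesis .
qed

lemma fpos_transpose: assumes "fpos n M" shows "fpos n (transpose_mat M)"
  using assms unfolding fpos_def using Q_transpose by auto

lemma transpose_schwarz_id: assumes W: "(W::complex mat) \<in> carrier_mat n n" and Y: "Y \<in> carrier_mat n n"
  shows "transpose_mat (transpose_mat W - mat_adjoint (transpose_mat Y) * transpose_mat Y) = W - Y * mat_adjoint Y"
proof -
  have YT: "transpose_mat Y \<in> carrier_mat n n" using Y by simp
  have aT: "mat_adjoint (transpose_mat Y) \<in> carrier_mat n n" using YT by (rule adj_carrier)
  have e: "transpose_mat (mat_adjoint (transpose_mat Y)) = mat_adjoint Y"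
  proof (rule eq_matI)
    fix i j assume "i < dim_row (mat_adjoint Y)" "j < dim_col (mat_adjoint Y)"
    then have i: "i < n" and j: "j < n" using Y by auto
    show "transpose_mat (mat_adjoint (transpose_mat Y)) $$ (i, j) = mat_adjoint Y $$ (i, j)"
      using i j Y by (simp add: adj_index[of j "transpose_mat Y" i])
  qed (use Y in auto)
  have "transpose_mat (transpose_mat W - mat_adjoint (transpose_mat Y) * transpose_mat Y)
      = transpose_mat (transpose_mat W) - transpose_mat (mat_adjoint (transpose_mat Y) * transpose_mat Y)"
    using W by (intro transpose_minus[of _ n n]) (simp, rule mult_carrier_mat[OF aT YT])
  also have "transpose_mat (mat_adjoint (transpose_mat Y) * transpose_mat Y) = Y * mat_adjoint Y"
    unfolding transpose_mult[OF aT YT] e by simp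
  finally show ?thesis by simp
qed

lemma Q_adjmul: assumes B: "B \<in> carrier_mat n n" and v: "v \<in> carrier_vec n"
  shows "Q (mat_adjoint B * B) v = of_real ((vec_norm (B *\<^sub>v v))^2)"
proof -
  have "(mat_adjoint B * B) *\<^sub>v v = mat_adjoint B *\<^sub>v (B *\<^sub>v v)" by (rule assoc_mult_mat_vec[OF adj_carrier[OF B] B v])
  then have "Q (mat_adjoint B * B) v = ip (mat_adjoint (mat_adjoint B) *\<^sub>v v) (B *\<^sub>v v)"
    unfolding Q_def by (simp add: ip_adj[OF adj_carrier[OF B] v mult_mat_vec_carrier[OF B v]])
  also have "\<dots> = of_real ((vec_norm (B *\<^sub>v v))^2)" by (simp add: ip_self)
  finally show ?thesis .
qed

locale ppt_idem =
  fixes n :: nat and \<phi> :: "complex mat \<Rightarrow> complex mat"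
  assumes ppt: "PPT_map n \<phi>" and unital: "unital_map n \<phi>"
    and idem: "\<forall>A \<in> carrier_mat n n. \<phi> (\<phi> A) = \<phi> A"
begin

sublocale P: ucp n \<phi>
  using ppt unital cp_ucp unfolding PPT_map_def unital_map_def by blast

definition \<psi> where "\<psi> = transpose_mat \<circ> \<phi>"

sublocale T: ucp n \<psi>
proof (rule cp_ucp)
  show "completely_positive n \<psi>" using ppt unfolding PPT_map_def \<psi>_def by blast
  show "\<psi> (1\<^sub>m n) = 1\<^sub>m n" using unital unfolding \<psi>_def unital_map_def by simp
qed

abbreviation "S \<equiv> \<phi> ` carrier_mat n n"

lemma idem': "A \<in> carrier_mat n n \<Longrightarrow> \<phi> (\<phi> A) = \<phi> A" using idem by blast

lemma S_car: "a \<in> S \<Longrightarrow> a \<in> carrier_mat n n" by auto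

lemma S_fix: "a \<in> S \<Longrightarrow> \<phi> a = a" using idem by auto

lemma S_adj: "a \<in> S \<Longrightarrow> mat_adjoint a \<in> S"
proof -
  assume a: "a \<in> S"
  have "mat_adjoint a = \<phi> (mat_adjoint a)" using P.adj[OF S_car[OF a]] S_fix[OF a] by simp
  then show ?thesis using S_car[OF a] by (metis adj_carrier image_eqI)
qed

lemma tschwarz: assumes x: "x \<in> carrier_mat n n"
  shows "fpos n (\<phi> (mat_adjoint x * x) - \<phi> x * mat_adjoint (\<phi> x))"
proof -
  have "fpos n (\<psi> (mat_adjoint x * x) - mat_adjoint (\<psi> x) * \<psi> x)" by (rule T.schwarz[OF x])
  then have "fpos n (transpose_mat (transpose_mat (\<phi> (mat_adjoint x * x)) - mat_adjoint (transpose_mat (\<phi> x)) * transpose_mat (\<phi> x)))"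
    unfolding \<psi>_def o_def by (rule fpos_transpose)
  then show ?thesis
    unfolding transpose_schwarz_id[OF P.car[OF mult_carrier_mat[OF adj_carrier[OF x] x]] P.car[OF x]] .
qed

lemma normal: assumes a: "a \<in> S" shows "\<phi> (mat_adjoint a * a) = \<phi> (a * mat_adjoint a)"
proof -
  have A: "a \<in> carrier_mat n n" by (rule S_car[OF a])
  have A': "mat_adjoint a \<in> carrier_mat n n" by (rule adj_carrier[OF A])
  have aa: "mat_adjoint a * a \<in> carrier_mat n n" by (rule mult_carrier_mat[OF A' A])
  have aa': "a * mat_adjoint a \<in> carrier_mat n n" by (rule mult_carrier_mat[OF A A'])
  have pa: "\<phi> a = a" by (rule S_fix[OF a])
  have pa': "\<phi> (mat_adjoint a) = mat_adjoint a" using P.adj[OF A] pa by simp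
  have 1: "fpos n (\<phi> (mat_adjoint a * a) - \<phi> (a * mat_adjoint a))"
  proof -
    have "fpos n (\<phi> (\<phi> (mat_adjoint a * a) - \<phi> a * mat_adjoint (\<phi> a)))" by (rule P.pos[OF tschwarz[OF A]])
    then show ?thesis unfolding pa P.minus[OF P.car[OF aa] aa'] idem'[OF aa] .
  qed
  have 2: "fpos n (\<phi> (a * mat_adjoint a) - \<phi> (mat_adjoint a * a))"
  proof -
    have "fpos n (\<phi> (\<phi> (mat_adjoint (mat_adjoint a) * mat_adjoint a) - \<phi> (mat_adjoint a) * mat_adjoint (\<phi> (mat_adjoint a))))"
      by (rule P.pos[OF tschwarz[OF A']])
    then show ?thesis unfolding pa' adj_adj P.minus[OF P.car[OF aa'] aa] idem'[OF aa'] .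
  qed
  let ?X = "\<phi> (mat_adjoint a * a)" and ?Y = "\<phi> (a * mat_adjoint a)"
  have X: "?X \<in> carrier_mat n n" by (rule P.car[OF aa])
  have Y: "?Y \<in> carrier_mat n n" by (rule P.car[OF aa'])
  have "?X - ?Y = 0\<^sub>m n n"
  proof (rule polarization)
    show "?X - ?Y \<in> carrier_mat n n" by (rule minus_carrier_mat[OF Y])
    fix v :: "complex vec" assume v: "v \<in> carrier_vec n"
    have "0 \<le> Q (?X - ?Y) v" using 1 v unfolding fpos_def by blast
    moreover have "0 \<le> Q (?Y - ?X) v" using 2 v unfolding fpos_def by blast
    moreover have "Q (?Y - ?X) v = - Q (?X - ?Y) v" unfolding Q_minus[OF X Y v] Q_minus[OF Y X v] by simp
    ultimately show "Q (?X - ?Y) v = 0" by (simp add: cnonneg_iff complex_eq_iff)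
  qed
  then show ?thesis by (rule mat_eq_from_diff[OF X Y])
qed

end

lemma scalar_kill:
  fixes \<beta> \<kappa> :: complex
  assumes H: "\<And>s. 0 \<le> s * cnj \<beta> + cnj s * \<beta> + cnj s * s * \<kappa>" and k: "0 \<le> \<kappa>"
  shows "\<beta> = 0"
proof (rule ccontr)
  assume nz: "\<beta> \<noteq> 0"
  define K where "K = Re \<kappa>"
  have K: "K \<ge> 0" and kK: "\<kappa> = of_real K" using k by (auto simp: K_def cnonneg_iff complex_eq_iff)
  define r where "r = 1 / (K + 1)"
  have r: "r > 0" using K by (simp add: r_def)
  have rK: "r * K < 1" using K by (simp add: r_def field_simps)
  define b where "b = (cmod \<beta>)^2"
  have b: "b > 0" using nz by (simp add: b_def)
  have bb: "\<beta> * cnj \<beta> = of_real b" unfolding b_def by (rule complex_norm_square[symmetric])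
  define s where "s = - of_real r * \<beta>"
  have c1: "s * cnj \<beta> = - (of_real r * of_real b)" unfolding s_def bb[symmetric] by (simp add: mult.assoc)
  have c2: "cnj s * \<beta> = - (of_real r * of_real b)" unfolding s_def bb[symmetric] by (simp add: mult.assoc mult.commute)
  have c3: "cnj s * s = of_real r * of_real r * of_real b" unfolding s_def bb[symmetric] by (simp add: mult.assoc mult.commute mult.left_commute)
  have "s * cnj \<beta> + cnj s * \<beta> + cnj s * s * \<kappa> = of_real (- 2 * r * b + r * r * b * K)"
    unfolding c1 c2 c3 kK by simp
  then have ge: "0 \<le> - 2 * r * b + r * r * b * K" using H[of s] by (simp add: cnonneg_iff)
  have "(r * b) * (r * K) < (r * b) * 1" by (rule mult_strict_left_mono[OF rK]) (use r b in simp)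
  then have "r * r * b * K < r * b" by (simp add: algebra_simps)
  with ge r b show False by (simp add: algebra_simps)
qed

context ppt_idem begin

lemma S_add: "a \<in> S \<Longrightarrow> b \<in> S \<Longrightarrow> a + b \<in> S"
proof -
  assume a: "a \<in> S" and b: "b \<in> S"
  have "\<phi> (a + b) = a + b" using P.add[OF S_car[OF a] S_car[OF b]] S_fix[OF a] S_fix[OF b] by simp
  then show ?thesis using add_carrier_mat[OF S_car[OF b]] by (metis image_eqI)
qed

lemma S_smult: "a \<in> S \<Longrightarrow> c \<cdot>\<^sub>m a \<in> S"
proof -
  assume a: "a \<in> S"
  have "\<phi> (c \<cdot>\<^sub>m a) = c \<cdot>\<^sub>m a" using P.smult[OF S_car[OF a]] S_fix[OF a] by simp
  then show ?thesis using smult_carrier_mat[OF S_car[OF a]] by (metis image_eqI)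
qed

definition g :: "nat \<Rightarrow> nat \<Rightarrow> complex mat \<Rightarrow> complex mat \<Rightarrow> complex" where
  "g p q a b = \<phi> (mat_adjoint a * b) $$ (p,q) - \<phi> (b * mat_adjoint a) $$ (p,q)"

lemma g_add1: assumes a1: "a1 \<in> carrier_mat n n" and a2: "a2 \<in> carrier_mat n n" and b: "b \<in> carrier_mat n n"
  and pq: "p < n" "q < n"
  shows "g p q (a1 + a2) b = g p q a1 b + g p q a2 b"
proof -
  have A1: "mat_adjoint a1 \<in> carrier_mat n n" and A2: "mat_adjoint a2 \<in> carrier_mat n n" using a1 a2 by auto
  have e1: "mat_adjoint (a1 + a2) * b = mat_adjoint a1 * b + mat_adjoint a2 * b"
    unfolding adj_add[OF a1 a2] by (rule add_mult_distrib_mat[OF A1 A2 b])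
  have e2: "b * mat_adjoint (a1 + a2) = b * mat_adjoint a1 + b * mat_adjoint a2"
    unfolding adj_add[OF a1 a2] by (rule mult_add_distrib_mat[OF b A1 A2])
  show ?thesis unfolding g_def e1 e2
    P.add[OF mult_carrier_mat[OF A1 b] mult_carrier_mat[OF A2 b]]
    P.add[OF mult_carrier_mat[OF b A1] mult_carrier_mat[OF b A2]]
    using pq A1 A2 b by simp
qed

lemma g_add2: assumes a: "a \<in> carrier_mat n n" and b1: "b1 \<in> carrier_mat n n" and b2: "b2 \<in> carrier_mat n n"
  and pq: "p < n" "q < n"
  shows "g p q a (b1 + b2) = g p q a b1 + g p q a b2"
proof -
  have A: "mat_adjoint a \<in> carrier_mat n n" using a by auto
  have e1: "mat_adjoint a * (b1 + b2) = mat_adjoint a * b1 + mat_adjoint a * b2"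
    by (rule mult_add_distrib_mat[OF A b1 b2])
  have e2: "(b1 + b2) * mat_adjoint a = b1 * mat_adjoint a + b2 * mat_adjoint a"
    by (rule add_mult_distrib_mat[OF b1 b2 A])
  show ?thesis unfolding g_def e1 e2
    P.add[OF mult_carrier_mat[OF A b1] mult_carrier_mat[OF A b2]]
    P.add[OF mult_carrier_mat[OF b1 A] mult_carrier_mat[OF b2 A]]
    using pq A b1 b2 by simp
qed

lemma g_smult1: assumes a: "a \<in> carrier_mat n n" and b: "b \<in> carrier_mat n n" and pq: "p < n" "q < n"
  shows "g p q (c \<cdot>\<^sub>m a) b = cnj c * g p q a b"
proof -
  have A: "mat_adjoint a \<in> carrier_mat n n" using a by auto
  have e1: "mat_adjoint (c \<cdot>\<^sub>m a) * b = cnj c \<cdot>\<^sub>m (mat_adjoint a * b)"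
    unfolding adj_smult by (rule mult_smult_assoc_mat[OF A b])
  have e2: "b * mat_adjoint (c \<cdot>\<^sub>m a) = cnj c \<cdot>\<^sub>m (b * mat_adjoint a)"
    unfolding adj_smult by (rule mult_smult_distrib[OF b A])
  show ?thesis unfolding g_def e1 e2 P.smult[OF mult_carrier_mat[OF A b]] P.smult[OF mult_carrier_mat[OF b A]]
    using pq A b by (simp add: right_diff_distrib)
qed

lemma g_smult2: assumes a: "a \<in> carrier_mat n n" and b: "b \<in> carrier_mat n n" and pq: "p < n" "q < n"
  shows "g p q a (c \<cdot>\<^sub>m b) = c * g p q a b"
proof -
  have A: "mat_adjoint a \<in> carrier_mat n n" using a by auto
  have e1: "mat_adjoint a * (c \<cdot>\<^sub>m b) = c \<cdot>\<^sub>m (mat_adjoint a * b)"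
    by (rule mult_smult_distrib[OF A b])
  have e2: "(c \<cdot>\<^sub>m b) * mat_adjoint a = c \<cdot>\<^sub>m (b * mat_adjoint a)"
    by (rule mult_smult_assoc_mat[OF b A])
  show ?thesis unfolding g_def e1 e2 P.smult[OF mult_carrier_mat[OF A b]] P.smult[OF mult_carrier_mat[OF b A]]
    using pq A b by (simp add: right_diff_distrib)
qed

lemma g_diag: "a \<in> S \<Longrightarrow> g p q a a = 0"
  unfolding g_def using normal by simp

lemma g_zero: assumes a: "a \<in> S" and b: "b \<in> S" and pq: "p < n" "q < n"
  shows "g p q a b = 0"
proof -
  have A: "a \<in> carrier_mat n n" and B: "b \<in> carrier_mat n n" using a b by auto
  have iB: "\<i> \<cdot>\<^sub>m b \<in> carrier_mat n n" using B by simp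
  have 1: "g p q (a + b) (a + b) = g p q a a + g p q a b + g p q b a + g p q b b"
    unfolding g_add1[OF A B add_carrier_mat[OF B] pq] g_add2[OF A A B pq] g_add2[OF B A B pq] by simp
  have 2: "g p q (a + \<i> \<cdot>\<^sub>m b) (a + \<i> \<cdot>\<^sub>m b) = g p q a a + \<i> * g p q a b - \<i> * g p q b a + g p q b b"
    unfolding g_add1[OF A iB add_carrier_mat[OF iB] pq] g_add2[OF A A iB pq] g_add2[OF iB A iB pq]
      g_smult1[OF B A pq] g_smult1[OF B iB pq] g_smult2[OF A B pq] g_smult2[OF B B pq] by simp
  have z1: "g p q a b + g p q b a = 0"
    using 1 g_diag[OF a] g_diag[OF b] g_diag[OF S_add[OF a b]] by simp
  have z2: "\<i> * (g p q a b - g p q b a) = 0"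
    using 2 g_diag[OF a] g_diag[OF b] g_diag[OF S_add[OF a S_smult[OF b]]] by (simp add: right_diff_distrib)
  then have "g p q a b - g p q b a = 0" by simp
  with z1 show ?thesis by (simp add: algebra_simps)
qed

lemma commute: assumes a: "a \<in> S" and b: "b \<in> S" shows "\<phi> (a * b) = \<phi> (b * a)"
proof (rule eq_matI)
  have A: "a \<in> carrier_mat n n" and B: "b \<in> carrier_mat n n" using a b by auto
  fix p q assume "p < dim_row (\<phi> (b * a))" "q < dim_col (\<phi> (b * a))"
  then have pq: "p < n" "q < n" using P.car[OF mult_carrier_mat[OF B A]] by auto
  have "g p q (mat_adjoint a) b = 0" by (rule g_zero[OF S_adj[OF a] b pq])
  then show "\<phi> (a * b) $$ (p, q) = \<phi> (b * a) $$ (p, q)" unfolding g_def by simp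
next
  have A: "a \<in> carrier_mat n n" and B: "b \<in> carrier_mat n n" using a b by auto
  show "dim_row (\<phi> (a * b)) = dim_row (\<phi> (b * a))" "dim_col (\<phi> (a * b)) = dim_col (\<phi> (b * a))"
    using P.car[OF mult_carrier_mat[OF B A]] P.car[OF mult_carrier_mat[OF A B]] by auto
qed

end

lemma smult_smult_mat': "(a::complex) \<cdot>\<^sub>m (b \<cdot>\<^sub>m A) = (a * b) \<cdot>\<^sub>m A"
  by (rule eq_matI) auto

context ppt_idem begin

lemma kill: assumes k: "k \<in> carrier_mat n n" and pk: "\<phi> k = 0\<^sub>m n n" and yS: "y \<in> S"
  shows "\<phi> (k * y) = 0\<^sub>m n n"
proof -
  have y: "y \<in> carrier_mat n n" by (rule S_car[OF yS])
  have py: "\<phi> y = y" by (rule S_fix[OF yS])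
  have K': "mat_adjoint k \<in> carrier_mat n n" using k by (rule adj_carrier)
  have Y': "mat_adjoint y \<in> carrier_mat n n" using y by (rule adj_carrier)
  have pk': "\<phi> (mat_adjoint k) = 0\<^sub>m n n" unfolding P.adj[OF k] pk by simp
  have ky: "k * y \<in> carrier_mat n n" by (rule mult_carrier_mat[OF k y])
  have kk: "k * mat_adjoint k \<in> carrier_mat n n" by (rule mult_carrier_mat[OF k K'])
  have yk: "mat_adjoint y * mat_adjoint k \<in> carrier_mat n n" by (rule mult_carrier_mat[OF Y' K'])
  have yy: "mat_adjoint y * y \<in> carrier_mat n n" by (rule mult_carrier_mat[OF Y' y])
  have form: "Q (\<phi> (k * y)) v = 0" if v: "v \<in> carrier_vec n" for v
  proof -
    define \<beta> where "\<beta> = Q (\<phi> (k * y)) v"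
    define \<kappa> where "\<kappa> = Q (\<phi> (k * mat_adjoint k)) v"
    have kpsd: "psd_mat n (k * mat_adjoint k)"
      unfolding psd_mat_def using kk K' by (intro conjI bexI[of _ "mat_adjoint k"]) auto
    have "fpos n (\<phi> (k * mat_adjoint k))" by (rule P.pos[OF psd_fpos[OF kpsd]])
    then have k0: "0 \<le> \<kappa>" using v unfolding fpos_def \<kappa>_def by blast
    have al: "Q (\<phi> (mat_adjoint y * mat_adjoint k)) v = cnj \<beta>"
      unfolding \<beta>_def adj_mult[OF k y, symmetric] P.adj[OF ky] by (rule Q_adj[OF P.car[OF ky] v])
    have H: "0 \<le> s * cnj \<beta> + cnj s * \<beta> + cnj s * s * \<kappa>" for s
    proof -
      define x where "x = y + s \<cdot>\<^sub>m mat_adjoint k"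
      have sk: "s \<cdot>\<^sub>m mat_adjoint k \<in> carrier_mat n n" using K' by (rule smult_carrier_mat)
      have x: "x \<in> carrier_mat n n" unfolding x_def by (rule add_carrier_mat[OF sk])
      have px: "\<phi> x = y"
        unfolding x_def P.add[OF y sk] P.smult[OF K'] pk' py smult_zero_mat using y by simp
      have xa: "mat_adjoint x = mat_adjoint y + cnj s \<cdot>\<^sub>m k"
        unfolding x_def adj_add[OF y sk] adj_smult adj_adj ..
      have ck: "cnj s \<cdot>\<^sub>m k \<in> carrier_mat n n" using k by (rule smult_carrier_mat)
      have E: "mat_adjoint x * x = (mat_adjoint y * y + cnj s \<cdot>\<^sub>m (k * y)) + (s \<cdot>\<^sub>m (mat_adjoint y * mat_adjoint k) + (cnj s * s) \<cdot>\<^sub>m (k * mat_adjoint k))"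
      proof -
        have "mat_adjoint x * x = (mat_adjoint y + cnj s \<cdot>\<^sub>m k) * y + (mat_adjoint y + cnj s \<cdot>\<^sub>m k) * (s \<cdot>\<^sub>m mat_adjoint k)"
          unfolding xa unfolding x_def by (rule mult_add_distrib_mat[OF add_carrier_mat[OF ck] y sk])
        also have "(mat_adjoint y + cnj s \<cdot>\<^sub>m k) * y = mat_adjoint y * y + (cnj s \<cdot>\<^sub>m k) * y"
          by (rule add_mult_distrib_mat[OF Y' ck y])
        also have "(cnj s \<cdot>\<^sub>m k) * y = cnj s \<cdot>\<^sub>m (k * y)" by (rule mult_smult_assoc_mat[OF k y])
        also have "(mat_adjoint y + cnj s \<cdot>\<^sub>m k) * (s \<cdot>\<^sub>m mat_adjoint k) = mat_adjoint y * (s \<cdot>\<^sub>m mat_adjoint k) + (cnj s \<cdot>\<^sub>m k) * (s \<cdot>\<^sub>m mat_adjoint k)"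
          by (rule add_mult_distrib_mat[OF Y' ck sk])
        also have "mat_adjoint y * (s \<cdot>\<^sub>m mat_adjoint k) = s \<cdot>\<^sub>m (mat_adjoint y * mat_adjoint k)" by (rule mult_smult_distrib[OF Y' K'])
        also have "(cnj s \<cdot>\<^sub>m k) * (s \<cdot>\<^sub>m mat_adjoint k) = (cnj s * s) \<cdot>\<^sub>m (k * mat_adjoint k)"
          unfolding mult_smult_assoc_mat[OF k sk] mult_smult_distrib[OF k K'] smult_smult_mat' ..
        finally show ?thesis .
      qed
      have c1: "cnj s \<cdot>\<^sub>m (k * y) \<in> carrier_mat n n" using ky by (rule smult_carrier_mat)
      have c2: "s \<cdot>\<^sub>m (mat_adjoint y * mat_adjoint k) \<in> carrier_mat n n" using yk by (rule smult_carrier_mat)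
      have c3: "(cnj s * s) \<cdot>\<^sub>m (k * mat_adjoint k) \<in> carrier_mat n n" using kk by (rule smult_carrier_mat)
      have PE: "\<phi> (mat_adjoint x * x) = (\<phi> (mat_adjoint y * y) + cnj s \<cdot>\<^sub>m \<phi> (k * y)) + (s \<cdot>\<^sub>m \<phi> (mat_adjoint y * mat_adjoint k) + (cnj s * s) \<cdot>\<^sub>m \<phi> (k * mat_adjoint k))"
        unfolding E P.add[OF add_carrier_mat[OF c1] add_carrier_mat[OF c3]] P.add[OF yy c1] P.add[OF c2 c3]
          P.smult[OF ky] P.smult[OF yk] P.smult[OF kk] ..
      have xx: "mat_adjoint x * x \<in> carrier_mat n n" by (rule mult_carrier_mat[OF adj_carrier[OF x] x])
      have "fpos n (\<phi> (mat_adjoint x * x) - mat_adjoint (\<phi> x) * \<phi> x)" by (rule P.schwarz[OF x])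
      then have "fpos n (\<phi> (\<phi> (mat_adjoint x * x) - mat_adjoint y * y))" unfolding px by (rule P.pos)
      then have F: "fpos n (\<phi> (mat_adjoint x * x) - \<phi> (mat_adjoint y * y))"
        unfolding P.minus[OF P.car[OF xx] yy] idem'[OF xx] .
      have Pyy: "\<phi> (mat_adjoint y * y) \<in> carrier_mat n n" by (rule P.car[OF yy])
      have Pky: "cnj s \<cdot>\<^sub>m \<phi> (k * y) \<in> carrier_mat n n" by (rule smult_carrier_mat[OF P.car[OF ky]])
      have Pyk: "s \<cdot>\<^sub>m \<phi> (mat_adjoint y * mat_adjoint k) \<in> carrier_mat n n" by (rule smult_carrier_mat[OF P.car[OF yk]])
      have Pkk: "(cnj s * s) \<cdot>\<^sub>m \<phi> (k * mat_adjoint k) \<in> carrier_mat n n" by (rule smult_carrier_mat[OF P.car[OF kk]])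
      have "Q (\<phi> (mat_adjoint x * x) - \<phi> (mat_adjoint y * y)) v = Q (\<phi> (mat_adjoint x * x)) v - Q (\<phi> (mat_adjoint y * y)) v"
        by (rule Q_minus[OF P.car[OF xx] Pyy v])
      also have "Q (\<phi> (mat_adjoint x * x)) v = (Q (\<phi> (mat_adjoint y * y)) v + cnj s * \<beta>) + (s * cnj \<beta> + cnj s * s * \<kappa>)"
        unfolding PE Q_plus[OF add_carrier_mat[OF Pky] add_carrier_mat[OF Pkk] v] Q_plus[OF Pyy Pky v] Q_plus[OF Pyk Pkk v]
          Q_smult_mat[OF P.car[OF ky] v] Q_smult_mat[OF P.car[OF yk] v] Q_smult_mat[OF P.car[OF kk] v] al \<beta>_def \<kappa>_def ..
      finally have "Q (\<phi> (mat_adjoint x * x) - \<phi> (mat_adjoint y * y)) v = s * cnj \<beta> + cnj s * \<beta> + cnj s * s * \<kappa>"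
        by simp
      moreover have "0 \<le> Q (\<phi> (mat_adjoint x * x) - \<phi> (mat_adjoint y * y)) v" using F v unfolding fpos_def by blast
      ultimately show ?thesis by simp
    qed
    show ?thesis using scalar_kill[OF H k0] unfolding \<beta>_def .
  qed
  show ?thesis by (rule polarization[OF P.car[OF ky] form])
qed

lemma kill_left: assumes k: "k \<in> carrier_mat n n" and pk: "\<phi> k = 0\<^sub>m n n" and yS: "y \<in> S"
  shows "\<phi> (y * k) = 0\<^sub>m n n"
proof -
  have y: "y \<in> carrier_mat n n" by (rule S_car[OF yS])
  have yk: "y * k \<in> carrier_mat n n" by (rule mult_carrier_mat[OF y k])
  have pk': "\<phi> (mat_adjoint k) = 0\<^sub>m n n" unfolding P.adj[OF k] pk by simp
  have "\<phi> (mat_adjoint k * mat_adjoint y) = 0\<^sub>m n n" by (rule kill[OF adj_carrier[OF k] pk' S_adj[OF yS]])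
  then have "mat_adjoint (\<phi> (y * k)) = 0\<^sub>m n n" unfolding adj_mult[OF y k, symmetric] P.adj[OF yk] .
  then have "mat_adjoint (mat_adjoint (\<phi> (y * k))) = 0\<^sub>m n n" by simp
  then show ?thesis by simp
qed

lemma assoc: assumes a: "a \<in> S" and b: "b \<in> S" and c: "c \<in> S"
  shows "\<phi> (\<phi> (a * b) * c) = \<phi> (a * \<phi> (b * c))"
proof -
  have A: "a \<in> carrier_mat n n" and B: "b \<in> carrier_mat n n" and C: "c \<in> carrier_mat n n" using a b c by auto
  have ab: "a * b \<in> carrier_mat n n" and bc: "b * c \<in> carrier_mat n n" using A B C by auto
  have pab: "\<phi> (a * b) \<in> carrier_mat n n" and pbc: "\<phi> (b * c) \<in> carrier_mat n n" using ab bc by auto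
  have k1: "\<phi> (\<phi> (a * b) - a * b) = 0\<^sub>m n n" unfolding P.minus[OF pab ab] idem'[OF ab] using pab by simp
  have k2: "\<phi> (\<phi> (b * c) - b * c) = 0\<^sub>m n n" unfolding P.minus[OF pbc bc] idem'[OF bc] using pbc by simp
  have "\<phi> ((\<phi> (a * b) - a * b) * c) = 0\<^sub>m n n" by (rule kill[OF minus_carrier_mat[OF ab] k1 c])
  then have 1: "\<phi> (\<phi> (a * b) * c) - \<phi> (a * b * c) = 0\<^sub>m n n"
    unfolding minus_mult_distrib_mat[OF pab ab C] P.minus[OF mult_carrier_mat[OF pab C] mult_carrier_mat[OF ab C]] .
  have "\<phi> (a * (\<phi> (b * c) - b * c)) = 0\<^sub>m n n" by (rule kill_left[OF minus_carrier_mat[OF bc] k2 a])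
  then have 2: "\<phi> (a * \<phi> (b * c)) - \<phi> (a * (b * c)) = 0\<^sub>m n n"
    unfolding mult_minus_distrib_mat[OF A pbc bc] P.minus[OF mult_carrier_mat[OF A pbc] mult_carrier_mat[OF A bc]] .
  have e1: "\<phi> (\<phi> (a * b) * c) = \<phi> (a * b * c)"
    by (rule mat_eq_from_diff[OF P.car[OF mult_carrier_mat[OF pab C]] P.car[OF mult_carrier_mat[OF ab C]] 1])
  have e2: "\<phi> (a * \<phi> (b * c)) = \<phi> (a * (b * c))"
    by (rule mat_eq_from_diff[OF P.car[OF mult_carrier_mat[OF A pbc]] P.car[OF mult_carrier_mat[OF A bc]] 2])
  show ?thesis unfolding e1 e2 assoc_mult_mat[OF A B C] ..
qed

end

lemma op_norm_mult: assumes A: "A \<in> carrier_mat n n" and B: "B \<in> carrier_mat n n"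
  shows "op_norm (A * B) \<le> op_norm A * op_norm B"
proof (rule op_norm_le)
  show "0 \<le> op_norm A * op_norm B" by (simp add: op_norm_nonneg)
  fix v :: "complex vec" assume "v \<in> carrier_vec (dim_col (A * B))"
  then have v: "v \<in> carrier_vec n" using B by simp
  have Bv: "B *\<^sub>v v \<in> carrier_vec n" by (rule mult_mat_vec_carrier[OF B v])
  have "vec_norm ((A * B) *\<^sub>v v) = vec_norm (A *\<^sub>v (B *\<^sub>v v))" by (simp only: assoc_mult_mat_vec[OF A B v])
  also have "\<dots> \<le> op_norm A * vec_norm (B *\<^sub>v v)" by (rule op_norm_bound) (use A Bv in simp)
  also have "\<dots> \<le> op_norm A * (op_norm B * vec_norm v)"
    by (rule mult_left_mono[OF op_norm_bound op_norm_nonneg]) (use B v in simp)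
  finally show "vec_norm ((A * B) *\<^sub>v v) \<le> op_norm A * op_norm B * vec_norm v" by (simp add: mult.assoc)
qed

lemma op_norm_add: assumes A: "A \<in> carrier_mat m n" and B: "B \<in> carrier_mat m n"
  shows "op_norm (A + B) \<le> op_norm A + op_norm B"
proof (rule op_norm_le)
  show "0 \<le> op_norm A + op_norm B" by (simp add: op_norm_nonneg)
  fix v :: "complex vec" assume "v \<in> carrier_vec (dim_col (A + B))"
  then have v: "v \<in> carrier_vec n" using B by simp
  have "vec_norm ((A + B) *\<^sub>v v) = vec_norm (A *\<^sub>v v + B *\<^sub>v v)" by (simp only: add_mult_distrib_mat_vec[OF A B v])
  also have "\<dots> \<le> vec_norm (A *\<^sub>v v) + vec_norm (B *\<^sub>v v)"
    by (rule vec_norm_add[OF mult_mat_vec_carrier[OF A v] mult_mat_vec_carrier[OF B v]])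
  also have "\<dots> \<le> op_norm A * vec_norm v + op_norm B * vec_norm v"
    by (rule add_mono; rule op_norm_bound) (use A B v in simp_all)
  finally show "vec_norm ((A + B) *\<^sub>v v) \<le> (op_norm A + op_norm B) * vec_norm v" by (simp add: distrib_right)
qed

lemma vec_norm_ge_entry: "i < dim_vec w \<Longrightarrow> cmod (w $ i) \<le> vec_norm w"
proof -
  assume i: "i < dim_vec w"
  have "(cmod (w $ i))^2 \<le> (\<Sum>k<dim_vec w. (cmod (w $ k))^2)"
    by (rule member_le_sum[of i "{..<dim_vec w}" "\<lambda>k. (cmod (w $ k))^2"]) (use i in auto)
  then have "(cmod (w $ i))^2 \<le> (vec_norm w)^2" by (simp add: vec_norm_sq)
  then show ?thesis using vec_norm_nonneg by (rule power2_le_imp_le)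
qed

lemma vec_norm_unit: "j < n \<Longrightarrow> vec_norm (unit_vec n j) = 1"
proof -
  assume j: "j < n"
  have "(\<Sum>k<n. (cmod (unit_vec n j $ k))^2) = (\<Sum>k<n. if k = j then 1 else 0)"
    by (rule sum.cong) (use j in auto)
  also have "\<dots> = 1" using j by simp
  finally show ?thesis unfolding vec_norm_def by simp
qed

lemma op_norm_entry: assumes A: "(A::complex mat) \<in> carrier_mat m n" and i: "i < m" and j: "j < n"
  shows "cmod (A $$ (i,j)) \<le> op_norm A"
proof -
  have "cmod (A $$ (i,j)) = cmod ((A *\<^sub>v unit_vec n j) $ i)" using mat_unit_vec[OF A j i] by simp
  also have "\<dots> \<le> vec_norm (A *\<^sub>v unit_vec n j)" by (rule vec_norm_ge_entry) (use A i in simp)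
  also have "\<dots> \<le> op_norm A * vec_norm (unit_vec n j)" by (rule op_norm_bound) (use A in simp)
  also have "\<dots> = op_norm A" using vec_norm_unit[OF j] by simp
  finally show ?thesis .
qed

lemma op_norm_zero: assumes A: "(A::complex mat) \<in> carrier_mat m n" and z: "op_norm A \<le> 0"
  shows "A = 0\<^sub>m m n"
proof (rule eq_matI)
  fix i j assume "i < dim_row (0\<^sub>m m n :: complex mat)" "j < dim_col (0\<^sub>m m n :: complex mat)"
  then have i: "i < m" and j: "j < n" by auto
  have "cmod (A $$ (i,j)) \<le> 0" using op_norm_entry[OF A i j] z by linarith
  then have "A $$ (i,j) = 0" by simp
  then show "A $$ (i,j) = 0\<^sub>m m n $$ (i,j)" using i j by simp
qed (use A in auto)

lemma op_norm_adj: assumes A: "A \<in> carrier_mat n n" shows "op_norm (mat_adjoint A) \<le> op_norm A"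
proof (rule op_norm_le)
  show "0 \<le> op_norm A" by (rule op_norm_nonneg)
  fix v :: "complex vec" assume "v \<in> carrier_vec (dim_col (mat_adjoint A))"
  then have v: "v \<in> carrier_vec n" using A by simp
  let ?w = "mat_adjoint A *\<^sub>v v"
  have w: "?w \<in> carrier_vec n" by (rule mult_mat_vec_carrier[OF adj_carrier[OF A] v])
  have "(vec_norm ?w)^2 = Re (ip ?w ?w)" by (rule vec_norm_ip)
  also have "ip ?w ?w = ip v (A *\<^sub>v ?w)" by (rule ip_adj[OF A v w, symmetric])
  also have "Re (ip v (A *\<^sub>v ?w)) \<le> cmod (ip v (A *\<^sub>v ?w))" by (rule complex_Re_le_cmod)
  also have "\<dots> \<le> vec_norm v * vec_norm (A *\<^sub>v ?w)" by (rule cauchy_schwarz) (use A v w in simp)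
  also have "\<dots> \<le> vec_norm v * (op_norm A * vec_norm ?w)"
    by (rule mult_left_mono[OF op_norm_bound vec_norm_nonneg]) (use A w in simp)
  finally have le: "(vec_norm ?w)^2 \<le> vec_norm v * (op_norm A * vec_norm ?w)" .
  show "vec_norm ?w \<le> op_norm A * vec_norm v"
  proof (cases "vec_norm ?w = 0")
    case True then show ?thesis by (simp add: op_norm_nonneg vec_norm_nonneg)
  next
    case False
    then have p: "vec_norm ?w > 0" using vec_norm_nonneg[of ?w] by simp
    have "vec_norm ?w * vec_norm ?w \<le> (op_norm A * vec_norm v) * vec_norm ?w"
      using le by (simp add: power2_eq_square algebra_simps)
    then show ?thesis using p by simp
  qed
qed

lemma frob_minus_comm: assumes "A \<in> carrier_mat m n" "B \<in> carrier_mat m n"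
  shows "frob (A - B) = frob (B - A)"
  unfolding frob_def using assms by (simp add: norm_minus_commute)

context ppt_idem begin

lemma schwarz_form: assumes x: "x \<in> carrier_mat n n" and v: "v \<in> carrier_vec n"
  shows "(vec_norm (\<phi> x *\<^sub>v v))^2 \<le> Re (Q (\<phi> (mat_adjoint x * x)) v)"
proof -
  have xx: "mat_adjoint x * x \<in> carrier_mat n n" by (rule mult_carrier_mat[OF adj_carrier[OF x] x])
  have px: "\<phi> x \<in> carrier_mat n n" by (rule P.car[OF x])
  have yy: "mat_adjoint (\<phi> x) * \<phi> x \<in> carrier_mat n n" by (rule mult_carrier_mat[OF adj_carrier[OF px] px])
  have "0 \<le> Q (\<phi> (mat_adjoint x * x) - mat_adjoint (\<phi> x) * \<phi> x) v"
    using P.schwarz[OF x] v unfolding fpos_def by blast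
  also have "Q (\<phi> (mat_adjoint x * x) - mat_adjoint (\<phi> x) * \<phi> x) v = Q (\<phi> (mat_adjoint x * x)) v - of_real ((vec_norm (\<phi> x *\<^sub>v v))^2)"
    unfolding Q_minus[OF P.car[OF xx] yy v] Q_adjmul[OF px v] ..
  finally show ?thesis by (simp add: cnonneg_iff)
qed

lemma contract: assumes x: "x \<in> carrier_mat n n" shows "op_norm (\<phi> x) \<le> op_norm x"
proof (rule op_norm_le)
  show "0 \<le> op_norm x" by (rule op_norm_nonneg)
  define s where "s = op_norm x"
  have s0: "s \<ge> 0" unfolding s_def by (rule op_norm_nonneg)
  have xx: "mat_adjoint x * x \<in> carrier_mat n n" by (rule mult_carrier_mat[OF adj_carrier[OF x] x])
  have sI: "of_real (s^2) \<cdot>\<^sub>m 1\<^sub>m n \<in> carrier_mat n n" by simp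
  let ?M = "of_real (s^2) \<cdot>\<^sub>m 1\<^sub>m n - mat_adjoint x * x"
  have QM: "Q ?M v = of_real (s^2 * (vec_norm v)^2 - (vec_norm (x *\<^sub>v v))^2)" if v: "v \<in> carrier_vec n" for v
    unfolding Q_minus[OF sI xx v] Q_smult_mat[OF one_carrier_mat v] Q_one[OF v] Q_adjmul[OF x v] by simp
  have "fpos n ?M" unfolding fpos_def
  proof (intro conjI ballI)
    show "?M \<in> carrier_mat n n" by (rule minus_carrier_mat[OF xx])
    fix v :: "complex vec" assume v: "v \<in> carrier_vec n"
    have "vec_norm (x *\<^sub>v v) \<le> s * vec_norm v" unfolding s_def by (rule op_norm_bound) (use x v in simp)
    then have "(vec_norm (x *\<^sub>v v))^2 \<le> (s * vec_norm v)^2" by (rule power_mono[OF _ vec_norm_nonneg])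
    then show "0 \<le> Q ?M v" unfolding QM[OF v] by (simp add: cnonneg_iff power_mult_distrib)
  qed
  then have F: "fpos n (\<phi> ?M)" by (rule P.pos)
  have PM: "\<phi> ?M = of_real (s^2) \<cdot>\<^sub>m 1\<^sub>m n - \<phi> (mat_adjoint x * x)"
    unfolding P.minus[OF sI xx] P.smult[OF one_carrier_mat] P.unit ..
  fix v :: "complex vec" assume "v \<in> carrier_vec (dim_col (\<phi> x))"
  then have v: "v \<in> carrier_vec n" using P.car[OF x] by simp
  have "0 \<le> Q (\<phi> ?M) v" using F v unfolding fpos_def by blast
  also have "Q (\<phi> ?M) v = of_real (s^2 * (vec_norm v)^2) - Q (\<phi> (mat_adjoint x * x)) v"
    unfolding PM Q_minus[OF sI P.car[OF xx] v] Q_smult_mat[OF one_carrier_mat v] Q_one[OF v] by simp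
  finally have "Re (Q (\<phi> (mat_adjoint x * x)) v) \<le> s^2 * (vec_norm v)^2" by (simp add: cnonneg_iff)
  with schwarz_form[OF x v] have "(vec_norm (\<phi> x *\<^sub>v v))^2 \<le> (s * vec_norm v)^2"
    by (simp add: power_mult_distrib)
  then show "vec_norm (\<phi> x *\<^sub>v v) \<le> op_norm x * vec_norm v"
    unfolding s_def[symmetric] by (rule power2_le_imp_le) (simp add: s0 vec_norm_nonneg)
qed

lemma cstar: assumes a: "a \<in> S" shows "op_norm (\<phi> (mat_adjoint a * a)) = (op_norm a)^2"
proof (rule antisym)
  have A: "a \<in> carrier_mat n n" by (rule S_car[OF a])
  have aa: "mat_adjoint a * a \<in> carrier_mat n n" by (rule mult_carrier_mat[OF adj_carrier[OF A] A])
  have "op_norm (\<phi> (mat_adjoint a * a)) \<le> op_norm (mat_adjoint a * a)" by (rule contract[OF aa])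
  also have "\<dots> \<le> op_norm (mat_adjoint a) * op_norm a" by (rule op_norm_mult[OF adj_carrier[OF A] A])
  also have "\<dots> \<le> op_norm a * op_norm a" by (rule mult_right_mono[OF op_norm_adj[OF A] op_norm_nonneg])
  finally show "op_norm (\<phi> (mat_adjoint a * a)) \<le> (op_norm a)^2" by (simp add: power2_eq_square)
  define N where "N = op_norm (\<phi> (mat_adjoint a * a))"
  have N0: "N \<ge> 0" unfolding N_def by (rule op_norm_nonneg)
  have "op_norm a \<le> sqrt N"
  proof (rule op_norm_le)
    show "0 \<le> sqrt N" using N0 by simp
    fix v :: "complex vec" assume "v \<in> carrier_vec (dim_col a)"
    then have v: "v \<in> carrier_vec n" using A by simp
    have pav: "\<phi> (mat_adjoint a * a) *\<^sub>v v \<in> carrier_vec n" by (rule mult_mat_vec_carrier[OF P.car[OF aa] v])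
    have "(vec_norm (a *\<^sub>v v))^2 \<le> Re (Q (\<phi> (mat_adjoint a * a)) v)"
      using schwarz_form[OF A v] S_fix[OF a] by simp
    also have "\<dots> \<le> cmod (Q (\<phi> (mat_adjoint a * a)) v)" by (rule complex_Re_le_cmod)
    also have "\<dots> \<le> vec_norm v * vec_norm (\<phi> (mat_adjoint a * a) *\<^sub>v v)"
      unfolding Q_def by (rule cauchy_schwarz) (use v pav carrier_matD[OF P.car[OF aa]] in simp)
    also have "\<dots> \<le> vec_norm v * (N * vec_norm v)"
      unfolding N_def by (rule mult_left_mono[OF op_norm_bound vec_norm_nonneg]) (use aa v in simp)
    finally have "(vec_norm (a *\<^sub>v v))^2 \<le> (sqrt N * vec_norm v)^2"
      using N0 by (simp add: power_mult_distrib power2_eq_square algebra_simps)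
    then show "vec_norm (a *\<^sub>v v) \<le> sqrt N * vec_norm v"
      by (rule power2_le_imp_le) (simp add: N0 vec_norm_nonneg)
  qed
  then have "(op_norm a)^2 \<le> (sqrt N)^2" by (rule power_mono[OF _ op_norm_nonneg])
  then show "(op_norm a)^2 \<le> op_norm (\<phi> (mat_adjoint a * a))" using N0 unfolding N_def by simp
qed

end

context ppt_idem begin

lemma complete: assumes fS: "\<forall>m. f m \<in> S"
  and C: "\<forall>e>0. \<exists>N. \<forall>p\<ge>N. \<forall>q\<ge>N. op_norm (f p - f q) < e"
  shows "\<exists>L\<in>S. (\<lambda>m. op_norm (f m - L)) \<longlonglongrightarrow> 0"
proof -
  have F: "f m \<in> carrier_mat n n" for m using fS S_car by blast
  have cau: "Cauchy (\<lambda>m. f m $$ (i,j))" if ij: "i < n" "j < n" for i j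
    unfolding Cauchy_def
  proof (intro allI impI)
    fix e :: real assume "e > 0"
    then obtain N where N: "\<forall>p\<ge>N. \<forall>q\<ge>N. op_norm (f p - f q) < e" using C by blast
    show "\<exists>M. \<forall>m\<ge>M. \<forall>na\<ge>M. dist (f m $$ (i, j)) (f na $$ (i, j)) < e"
    proof (intro exI allI impI)
      fix p q assume p: "p \<ge> N" and q: "q \<ge> N"
      have "dist (f p $$ (i, j)) (f q $$ (i, j)) = cmod ((f p - f q) $$ (i,j))"
        using F[of p] F[of q] ij by (simp add: dist_complex_def)
      also have "\<dots> \<le> op_norm (f p - f q)" by (rule op_norm_entry[OF minus_carrier_mat[OF F] ij])
      also have "\<dots> < e" using N p q by blast
      finally show "dist (f p $$ (i, j)) (f q $$ (i, j)) < e" .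
    qed
  qed
  define L where "L = mat n n (\<lambda>(i,j). lim (\<lambda>m. f m $$ (i,j)))"
  have Lc: "L \<in> carrier_mat n n" unfolding L_def by simp
  have conv: "(\<lambda>m. f m $$ (i,j)) \<longlonglongrightarrow> L $$ (i,j)" if ij: "i < n" "j < n" for i j
    using Cauchy_convergent[OF cau[OF ij]] ij unfolding L_def by (simp add: convergent_LIMSEQ_iff)
  have fr: "frob (f m - L) = sqrt (\<Sum>i<n. \<Sum>j<n. (cmod (f m $$ (i,j) - L $$ (i,j)))^2)" for m
    unfolding frob_def using F[of m] Lc by (intro arg_cong[where f=sqrt] sum.cong refl) auto
  have t: "(\<lambda>m. \<Sum>i<n. \<Sum>j<n. (cmod (f m $$ (i,j) - L $$ (i,j)))^2) \<longlonglongrightarrow> 0"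
  proof (rule tendsto_null_sum)
    fix i assume i: "i \<in> {..<n}"
    show "(\<lambda>m. \<Sum>j<n. (cmod (f m $$ (i,j) - L $$ (i,j)))^2) \<longlonglongrightarrow> 0"
    proof (rule tendsto_null_sum)
      fix j assume j: "j \<in> {..<n}"
      have "(\<lambda>m. f m $$ (i,j) - L $$ (i,j)) \<longlonglongrightarrow> L $$ (i,j) - L $$ (i,j)"
        by (intro tendsto_diff conv tendsto_const) (use i j in auto)
      then have "(\<lambda>m. cmod (f m $$ (i,j) - L $$ (i,j))) \<longlonglongrightarrow> 0"
        by (simp add: tendsto_norm_zero)
      then have "(\<lambda>m. (cmod (f m $$ (i,j) - L $$ (i,j)))^2) \<longlonglongrightarrow> 0^2" by (rule tendsto_power)
      then show "(\<lambda>m. (cmod (f m $$ (i,j) - L $$ (i,j)))^2) \<longlonglongrightarrow> 0" by simp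
    qed
  qed
  have frt: "(\<lambda>m. frob (f m - L)) \<longlonglongrightarrow> 0"
    unfolding fr using tendsto_real_sqrt[OF t] by simp
  have opt: "(\<lambda>m. op_norm (f m - L)) \<longlonglongrightarrow> 0"
    by (rule tendsto_sandwich[OF _ _ tendsto_const frt]) (auto simp: op_norm_nonneg op_norm_frob)
  have bound: "op_norm (\<phi> L - L) \<le> 2 * frob (f m - L)" for m
  proof -
    have fm: "\<phi> (f m) = f m" using fS S_fix by blast
    have PL: "\<phi> L \<in> carrier_mat n n" by (rule P.car[OF Lc])
    have e: "\<phi> L - L = \<phi> (L - f m) + (f m - L)"
      unfolding P.minus[OF Lc F] fm using PL Lc F[of m] by (intro eq_matI) auto
    have "op_norm (\<phi> L - L) \<le> op_norm (\<phi> (L - f m)) + op_norm (f m - L)"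
      unfolding e by (rule op_norm_add[OF P.car[OF minus_carrier_mat[OF F]] minus_carrier_mat[OF Lc]])
    also have "\<dots> \<le> op_norm (L - f m) + op_norm (f m - L)"
      by (rule add_right_mono[OF contract[OF minus_carrier_mat[OF F]]])
    also have "\<dots> \<le> frob (L - f m) + frob (f m - L)" by (rule add_mono[OF op_norm_frob op_norm_frob])
    also have "frob (L - f m) = frob (f m - L)" by (rule frob_minus_comm[OF Lc F])
    finally show ?thesis by simp
  qed
  have "(\<lambda>m. 2 * frob (f m - L)) \<longlonglongrightarrow> 2 * 0" by (rule tendsto_mult[OF tendsto_const frt])
  then have "op_norm (\<phi> L - L) \<le> 2 * 0" by (rule LIMSEQ_le_const) (use bound in blast)
  then have "\<phi> L - L = 0\<^sub>m n n" by (intro op_norm_zero[OF minus_carrier_mat[OF Lc]]) simp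
  then have "\<phi> L = L" by (rule mat_eq_from_diff[OF P.car[OF Lc] Lc])
  then have "L \<in> S" using Lc by (metis image_eqI)
  with opt show ?thesis by blast
qed

lemma cstar_alg: "is_Cstar_algebra n S (\<lambda>a b. \<phi> (a * b))"
  unfolding is_Cstar_algebra_def
proof (intro conjI ballI allI impI)
  show "S \<subseteq> carrier_mat n n" by auto
  show "0\<^sub>m n n \<in> S" using P.zero zero_carrier_mat by (metis image_eqI)
  fix a b c assume a: "a \<in> S" and b: "b \<in> S"
  have A: "a \<in> carrier_mat n n" and B: "b \<in> carrier_mat n n" using a b by auto
  show "a + b \<in> S" by (rule S_add[OF a b])
  show "\<phi> (a * b) \<in> S" using mult_carrier_mat[OF A B] by blast
  show "mat_adjoint (\<phi> (a * b)) = \<phi> (mat_adjoint b * mat_adjoint a)"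
    unfolding adj_mult[OF A B, symmetric] by (rule P.adj[OF mult_carrier_mat[OF A B], symmetric])
  show "op_norm (\<phi> (a * b)) \<le> op_norm a * op_norm b"
    using contract[OF mult_carrier_mat[OF A B]] op_norm_mult[OF A B] by linarith
  fix z
  show "\<phi> (z \<cdot>\<^sub>m a * b) = z \<cdot>\<^sub>m \<phi> (a * b)"
    unfolding mult_smult_assoc_mat[OF A B] by (rule P.smult[OF mult_carrier_mat[OF A B]])
  show "\<phi> (a * (z \<cdot>\<^sub>m b)) = z \<cdot>\<^sub>m \<phi> (a * b)"
    unfolding mult_smult_distrib[OF A B] by (rule P.smult[OF mult_carrier_mat[OF A B]])
next
  fix a c assume a: "a \<in> S"
  show "c \<cdot>\<^sub>m a \<in> S" by (rule S_smult[OF a])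
next
  fix a b c assume a: "a \<in> S" and b: "b \<in> S" and c: "c \<in> S"
  show "\<phi> (\<phi> (a * b) * c) = \<phi> (a * \<phi> (b * c))" by (rule assoc[OF a b c])
  have A: "a \<in> carrier_mat n n" and B: "b \<in> carrier_mat n n" and C: "c \<in> carrier_mat n n" using a b c by auto
  show "\<phi> (a * (b + c)) = \<phi> (a * b) + \<phi> (a * c)"
    unfolding mult_add_distrib_mat[OF A B C] by (rule P.add[OF mult_carrier_mat[OF A B] mult_carrier_mat[OF A C]])
  show "\<phi> ((a + b) * c) = \<phi> (a * c) + \<phi> (b * c)"
    unfolding add_mult_distrib_mat[OF A B C] by (rule P.add[OF mult_carrier_mat[OF A C] mult_carrier_mat[OF B C]])
next
  fix a assume a: "a \<in> S"
  show "mat_adjoint a \<in> S" by (rule S_adj[OF a])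
  show "op_norm (\<phi> (mat_adjoint a * a)) = (op_norm a)^2" by (rule cstar[OF a])
next
  fix f :: "nat \<Rightarrow> complex mat"
  assume "(\<forall>m. f m \<in> S) \<and> (\<forall>e>0. \<exists>N. \<forall>p\<ge>N. \<forall>q\<ge>N. op_norm (f p - f q) < e)"
  then show "\<exists>L\<in>S. (\<lambda>m. op_norm (f m - L)) \<longlonglongrightarrow> 0" using complete by blast
qed

lemma abelian: "is_abelian S (\<lambda>a b. \<phi> (a * b))"
  unfolding is_abelian_def using commute by blast

end

theorem mainTheorem4:
  fixes n :: nat and \<phi> :: "complex mat \<Rightarrow> complex mat"
  assumes "PPT_map n \<phi>"
    and "unital_map n \<phi>"
    and "\<forall>A \<in> carrier_mat n n. \<phi> (\<phi> A) = \<phi> A"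
  shows "is_Cstar_algebra n (\<phi> ` carrier_mat n n) (\<lambda>a b. \<phi> (a * b))
       \<and> is_abelian (\<phi> ` carrier_mat n n) (\<lambda>a b. \<phi> (a * b))"
proof -
  interpret ppt_idem n \<phi> using assms by unfold_locales
  show ?thesis using cstar_alg abelian by blast
qed

end
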